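(* Let $f:\mathbb{R}^d\to\mathbb{R}$ be convex, differentiable and $L$-smooth ($L>0$), minimized at $x_*\in\mathbb{R}^d$. Let $x_t,z_t$, $t\ge 0$, be the continuized process (defined in the context) with parameter functions $\eta_t,\eta_t',\gamma_t,\gamma_t'$ and arbitrary initial points $x_0,z_0\in\mathbb{R}^d$. \begin{enumerate} \item If $\eta_t=\frac{2}{t}$, $\eta_t'=0$, $\gamma_t=\frac1L$, $\gamma_t'=\frac{t}{2L}$, then for all $t>0$, $$\mathbb{E} f(x_t)-f(x_* )\le \frac{2L\|z_0-x_*\|^2}{t^2}.$$ \item If moreover $f$ is $\mu$-strongly convex with $\mu>0$, and $\eta_t=\eta_t'\equiv\sqrt{\mu/L}$, $\gamma_t\equiv\frac1L$, $\gamma_t'\equiv\frac{1}{\sqrt{\mu L}}$, then for all $t\ge0$, $$\mathbb{E} f(x_t)-f(x_* )\le\Big(f(x_0)-f(x_* )+\frac{\mu}{2}\|z_0-x_*\|^2\Big)\exp\Big(-\sqrt{\tfrac{\mu}{L}}\,t\Big).$$ \end{enumerate}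
   Context: $f$ is $L$-smooth if $f(y)\le f(x)+\langle\nabla f(x),y-x\rangle+\frac L2\|y-x\|^2$ for all $x,y$, and $\mu$-strongly convex if $f(y)\ge f(x)+\langle\nabla f(x),y-x\rangle+\frac\mu2\|y-x\|^2$ for all $x,y$. Continuized process: let $T_0=0<T_1<T_2<\dots$ be random times such that $T_1,T_2-T_1,T_3-T_2,\dots$ are i.i.d. exponential random variables with rate $1$ (equivalently, $N=\sum_{k\ge1}\delta_{T_k}$ is a homogeneous Poisson point process on $\mathbb{R}_{\ge0}$ with intensity Lebesgue measure). Given functions $\eta_t,\eta'_t,\gamma_t,\gamma'_t$ of $t\ge0$, the processes $t\mapsto x_t,z_t\in\mathbb{R}^d$ are càdlàg (right-continuous with left limits $x_{t-},z_{t-}$), start at $x_0,z_0$, satisfy between consecutive jump times the linear ODE $\frac{d x_t}{dt}=\eta_t(z_t-x_t)$, $\frac{dz_t}{dt}=\eta'_t(x_t-z_t)$, and at each time $T_k$ ($k\ge1$) take gradient steps $x_{T_k}=x_{T_k-}-\gamma_{T_k}\nabla f(x_{T_k-})$, $z_{T_k}=z_{T_k-}-\gamma'_{T_k}\nabla f(x_{T_k-})$. Compactly, $dx_t=\eta_t(z_t-x_t)dt-\gamma_t\nabla f(x_t)dN(t)$, $dz_t=\eta'_t(x_t-z_t)dt-\gamma'_t\nabla f(x_t)dN(t)$. Expectation is over the random times. *)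

theory Defs
  imports "HOL-Analysis.Analysis" "HOL-Probability.Probability"
begin

definition L_smooth :: "real \<Rightarrow> ('a::euclidean_space \<Rightarrow> real) \<Rightarrow> ('a \<Rightarrow> 'a) \<Rightarrow> bool" where
  "L_smooth L f df \<longleftrightarrow>
     (\<forall>x y. f y \<le> f x + df x \<bullet> (y - x) + L / 2 * (norm (y - x))\<^sup>2)"

definition strongly_convex :: "real \<Rightarrow> ('a::euclidean_space \<Rightarrow> real) \<Rightarrow> ('a \<Rightarrow> 'a) \<Rightarrow> bool" where
  "strongly_convex \<mu> f df \<longleftrightarrow>
     (\<forall>x y. f y \<ge> f x + df x \<bullet> (y - x) + \<mu> / 2 * (norm (y - x))\<^sup>2)"

definition poisson_jump_times :: "'w measure \<Rightarrow> (nat \<Rightarrow> 'w \<Rightarrow> real) \<Rightarrow> bool" where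
  "poisson_jump_times M T \<longleftrightarrow>
     (\<forall>w\<in>space M. T 0 w = 0) \<and>
     prob_space.indep_vars M (\<lambda>_. borel) (\<lambda>k w. T (Suc k) w - T k w) UNIV \<and>
     (\<forall>k. distributed M lborel (\<lambda>w. T (Suc k) w - T k w) (exponential_density 1))"

definition valid_jump_times :: "(nat \<Rightarrow> real) \<Rightarrow> bool" where
  "valid_jump_times \<tau> \<longleftrightarrow> \<tau> 0 = 0 \<and> strict_mono \<tau> \<and> filterlim \<tau> at_top sequentially"

definition continuized_path ::
  "(real \<Rightarrow> real) \<Rightarrow> (real \<Rightarrow> real) \<Rightarrow> (real \<Rightarrow> real) \<Rightarrow> (real \<Rightarrow> real) \<Rightarrow>
   ('a::euclidean_space \<Rightarrow> 'a) \<Rightarrow> 'a \<Rightarrow> 'a \<Rightarrow> (nat \<Rightarrow> real) \<Rightarrow> (real \<Rightarrow> 'a) \<Rightarrow> (real \<Rightarrow> 'a) \<Rightarrow> bool"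
  where
  "continuized_path \<eta> \<eta>' \<gamma> \<gamma>' df x0 z0 \<tau> x z \<longleftrightarrow>
     x 0 = x0 \<and> z 0 = z0 \<and>
     (\<forall>k. continuous_on {\<tau> k..<\<tau> (Suc k)} x \<and> continuous_on {\<tau> k..<\<tau> (Suc k)} z \<and>
          (\<forall>t\<in>{\<tau> k<..<\<tau> (Suc k)}.
              (x has_vector_derivative (\<eta> t *\<^sub>R (z t - x t))) (at t) \<and>
              (z has_vector_derivative (\<eta>' t *\<^sub>R (x t - z t))) (at t))) \<and>
     (\<forall>k\<ge>1. \<exists>xl zl. (x \<longlongrightarrow> xl) (at_left (\<tau> k)) \<and> (z \<longlongrightarrow> zl) (at_left (\<tau> k)) \<and>
          x (\<tau> k) = xl - \<gamma> (\<tau> k) *\<^sub>R df xl \<and>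
          z (\<tau> k) = zl - \<gamma>' (\<tau> k) *\<^sub>R df xl)"

definition continuized_process ::
  "'w measure \<Rightarrow> (nat \<Rightarrow> 'w \<Rightarrow> real) \<Rightarrow>
   (real \<Rightarrow> real) \<Rightarrow> (real \<Rightarrow> real) \<Rightarrow> (real \<Rightarrow> real) \<Rightarrow> (real \<Rightarrow> real) \<Rightarrow>
   ('a::euclidean_space \<Rightarrow> 'a) \<Rightarrow> 'a \<Rightarrow> 'a \<Rightarrow> ('w \<Rightarrow> real \<Rightarrow> 'a) \<Rightarrow> ('w \<Rightarrow> real \<Rightarrow> 'a) \<Rightarrow> bool"
  where
  "continuized_process M T \<eta> \<eta>' \<gamma> \<gamma>' df x0 z0 X Z \<longleftrightarrow>
     (AE w in M. valid_jump_times (\<lambda>k. T k w) \<longrightarrow>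
        continuized_path \<eta> \<eta>' \<gamma> \<gamma>' df x0 z0 (\<lambda>k. T k w) (X w) (Z w))"

end

theory Submission
  imports Defs
begin

abbreviation Expo :: "real measure" where
  "Expo \<equiv> density lborel (\<lambda>x. ennreal (exponential_density 1 x))"

lemma prob_Expo: "prob_space Expo"
  by (rule prob_space_exponential_density) simp

lemma law_incr:
  assumes P: "prob_space M" and PJ: "poisson_jump_times M T"
  shows "distr M (stream_space Expo) (\<lambda>w. to_stream (\<lambda>k. T (Suc k) w - T k w)) = stream_space Expo"
    and "(\<lambda>w. to_stream (\<lambda>k. T (Suc k) w - T k w)) \<in> measurable M (stream_space Expo)"
proof -
  interpret prob_space M by fact
  define E where "E = (\<lambda>k w. T (Suc k) w - T k w)"
  have D: "\<And>k. distributed M lborel (E k) (exponential_density 1)"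
    using PJ unfolding poisson_jump_times_def E_def by auto
  have rv: "\<And>k. random_variable borel (E k)"
    using D unfolding distributed_def by (simp add: measurable_lborel1)
  have ind: "indep_vars (\<lambda>_. borel) E UNIV"
    using PJ unfolding poisson_jump_times_def E_def by auto
  have eq1: "distr M (\<Pi>\<^sub>M i\<in>UNIV. borel) (\<lambda>x. \<lambda>i\<in>UNIV. E i x) = (\<Pi>\<^sub>M i\<in>UNIV. distr M borel (E i))"
    using indep_vars_iff_distr_eq_PiM[where I=UNIV and M'="\<lambda>_. borel" and X=E] rv ind by simp
  have eq2: "distr M borel (E i) = Expo" for i
  proof -
    have "distr M borel (E i) = distr M lborel (E i)"
      by (rule distr_cong) auto
    also have "\<dots> = Expo" using D[of i] unfolding distributed_def by simp
    finally show ?thesis .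
  qed
  have mE: "(\<lambda>x. \<lambda>i\<in>UNIV. E i x) \<in> measurable M (\<Pi>\<^sub>M i\<in>UNIV. Expo)"
  proof (rule measurable_restrict)
    fix i :: nat
    show "E i \<in> measurable M Expo"
      using rv[of i] by (subst measurable_cong_sets[where M'=M and N'=borel]) auto
  qed
  have eq3: "distr M (\<Pi>\<^sub>M i\<in>UNIV. Expo) (\<lambda>x. \<lambda>i\<in>UNIV. E i x) = (\<Pi>\<^sub>M i\<in>UNIV. Expo)"
  proof -
    have "distr M (\<Pi>\<^sub>M i\<in>UNIV. Expo) (\<lambda>x. \<lambda>i\<in>UNIV. E i x) = distr M (\<Pi>\<^sub>M i\<in>UNIV. borel) (\<lambda>x. \<lambda>i\<in>UNIV. E i x)"
      by (rule distr_cong) (auto intro!: sets_PiM_cong)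
    then show ?thesis using eq1 eq2 by simp
  qed
  have "(\<lambda>w. to_stream (\<lambda>k. E k w)) = to_stream \<circ> (\<lambda>x. \<lambda>i\<in>UNIV. E i x)"
    by (auto simp: fun_eq_iff restrict_UNIV)
  moreover have "distr M (stream_space Expo) (to_stream \<circ> (\<lambda>x. \<lambda>i\<in>UNIV. E i x)) = stream_space Expo"
    apply (subst distr_distr[symmetric, OF measurable_to_stream mE])
    apply (subst eq3)
    apply (rule stream_space_eq_distr[symmetric])
    done
  ultimately show "distr M (stream_space Expo) (\<lambda>w. to_stream (\<lambda>k. T (Suc k) w - T k w)) = stream_space Expo"
    unfolding E_def by simp
  show "(\<lambda>w. to_stream (\<lambda>k. T (Suc k) w - T k w)) \<in> measurable M (stream_space Expo)"
    using measurable_comp[OF mE measurable_to_stream] unfolding E_def by (simp add: o_def restrict_UNIV)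
qed


fun V :: "(real \<Rightarrow> 'b \<Rightarrow> real) \<Rightarrow> (real \<Rightarrow> real \<Rightarrow> 'b \<Rightarrow> 'b) \<Rightarrow> (real \<Rightarrow> 'b \<Rightarrow> 'b) \<Rightarrow> real \<Rightarrow> nat \<Rightarrow>
   real \<Rightarrow> 'b \<Rightarrow> real stream \<Rightarrow> ennreal" where
  "V \<phi> Fl J t 0 s st \<omega> = (if t < s + shd \<omega> then ennreal (\<phi> t (Fl s t st)) else 0)"
| "V \<phi> Fl J t (Suc n) s st \<omega> = (if t < s + shd \<omega> then ennreal (\<phi> t (Fl s t st))
     else V \<phi> Fl J t n (s + shd \<omega>) (J (s + shd \<omega>) (Fl s (s + shd \<omega>) st)) (stl \<omega>))"

lemma V_meas:
  fixes \<phi> :: "real \<Rightarrow> 'b::euclidean_space \<Rightarrow> real"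
  assumes mA: "(\<lambda>p. \<phi> t (Fl (fst p) t (snd p))) \<in> borel_measurable (borel \<Otimes>\<^sub>M (borel :: 'b measure))"
  and mB: "(\<lambda>q. (fst (fst q) + snd q, J (fst (fst q) + snd q) (Fl (fst (fst q)) (fst (fst q) + snd q) (snd (fst q)))))
      \<in> measurable ((borel \<Otimes>\<^sub>M (borel :: 'b measure)) \<Otimes>\<^sub>M borel) (borel \<Otimes>\<^sub>M borel)"
  shows "(\<lambda>x. V \<phi> Fl J t n (fst (fst x)) (snd (fst x)) (snd x)) \<in> borel_measurable ((borel \<Otimes>\<^sub>M (borel :: 'b measure)) \<Otimes>\<^sub>M stream_space Expo)"
proof (induction n)
  case 0
  have [measurable]: "(\<lambda>x. \<phi> t (Fl (fst (fst x)) t (snd (fst x)))) \<in> borel_measurable ((borel \<Otimes>\<^sub>M (borel :: 'b measure)) \<Otimes>\<^sub>M stream_space Expo)"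
    by (rule measurable_compose[OF measurable_fst mA])
  have [measurable]: "(\<lambda>x. shd (snd x)) \<in> borel_measurable ((borel \<Otimes>\<^sub>M (borel :: 'b measure)) \<Otimes>\<^sub>M stream_space Expo)"
    using measurable_compose[OF measurable_snd measurable_shd] by (simp cong: measurable_cong_sets)
  show ?case by simp
next
  case (Suc n)
  define N where "N = (((borel :: real measure) \<Otimes>\<^sub>M (borel :: 'b measure)) \<Otimes>\<^sub>M stream_space Expo)"
  have [measurable]: "(\<lambda>x. \<phi> t (Fl (fst (fst x)) t (snd (fst x)))) \<in> borel_measurable N"
    unfolding N_def by (rule measurable_compose[OF measurable_fst mA])
  have [measurable]: "(\<lambda>x. shd (snd x)) \<in> borel_measurable N"
    using measurable_compose[OF measurable_snd measurable_shd] by (simp add: N_def cong: measurable_cong_sets)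
  have [measurable]: "(\<lambda>x. stl (snd x)) \<in> measurable N (stream_space Expo)"
    unfolding N_def by measurable
  have h1: "(\<lambda>x. (fst x, shd (snd x))) \<in> measurable N ((borel \<Otimes>\<^sub>M (borel :: 'b measure)) \<Otimes>\<^sub>M borel)"
    unfolding N_def by measurable
  have h2: "(\<lambda>x. (fst (fst x) + shd (snd x), J (fst (fst x) + shd (snd x)) (Fl (fst (fst x)) (fst (fst x) + shd (snd x)) (snd (fst x)))))
      \<in> measurable N (borel \<Otimes>\<^sub>M borel)"
    using measurable_compose[OF h1 mB] by simp
  have h3: "(\<lambda>x. ((fst (fst x) + shd (snd x), J (fst (fst x) + shd (snd x)) (Fl (fst (fst x)) (fst (fst x) + shd (snd x)) (snd (fst x)))), stl (snd x)))
      \<in> measurable N N"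
    using h2 unfolding N_def by measurable
  have [measurable]: "(\<lambda>x. V \<phi> Fl J t n (fst (fst x) + shd (snd x)) (J (fst (fst x) + shd (snd x)) (Fl (fst (fst x)) (fst (fst x) + shd (snd x)) (snd (fst x)))) (stl (snd x))) \<in> borel_measurable N"
    using measurable_compose[OF h3 Suc[folded N_def]] by simp
  have [measurable]: "(\<lambda>x. fst (fst x)) \<in> borel_measurable N"
    unfolding N_def by measurable
  have "(\<lambda>x. if t < fst (fst x) + shd (snd x)
          then ennreal (\<phi> t (Fl (fst (fst x)) t (snd (fst x))))
          else V \<phi> Fl J t n (fst (fst x) + shd (snd x)) (J (fst (fst x) + shd (snd x))
                  (Fl (fst (fst x)) (fst (fst x) + shd (snd x)) (snd (fst x)))) (stl (snd x)))
     \<in> borel_measurable N"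
    by measurable
  then show ?case unfolding N_def[symmetric] by simp
qed

lemma V_meas_S:
  fixes \<phi> :: "real \<Rightarrow> 'b::euclidean_space \<Rightarrow> real"
  assumes mA: "(\<lambda>p. \<phi> t (Fl (fst p) t (snd p))) \<in> borel_measurable (borel \<Otimes>\<^sub>M (borel :: 'b measure))"
  and mB: "(\<lambda>q. (fst (fst q) + snd q, J (fst (fst q) + snd q) (Fl (fst (fst q)) (fst (fst q) + snd q) (snd (fst q)))))
      \<in> measurable ((borel \<Otimes>\<^sub>M (borel :: 'b measure)) \<Otimes>\<^sub>M borel) (borel \<Otimes>\<^sub>M borel)"
  shows "(\<lambda>\<omega>. V \<phi> Fl J t m s st \<omega>) \<in> borel_measurable (stream_space Expo)"
proof -
  have "(\<lambda>\<omega>. ((s, st), \<omega>)) \<in> measurable (stream_space Expo) ((borel \<Otimes>\<^sub>M (borel :: 'b measure)) \<Otimes>\<^sub>M stream_space Expo)"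
    by measurable
  from measurable_compose[OF this V_meas[where \<phi>=\<phi> and Fl=Fl and J=J and t=t and n=m, OF mA mB]] show ?thesis by simp
qed

lemma AE_Expo_pos: "AE e in Expo. 0 < e"
proof (subst AE_density)
  show "(\<lambda>x. ennreal (exponential_density 1 x)) \<in> borel_measurable lborel" by measurable
  show "AE x in lborel. 0 < ennreal (exponential_density 1 x) \<longrightarrow> 0 < x"
    using AE_lborel_singleton[of 0]
    by eventually_elim (auto simp: exponential_density_def split: if_splits)
qed

lemma V_bound:
  fixes \<phi> :: "real \<Rightarrow> 'b::euclidean_space \<Rightarrow> real"
  assumes mA: "(\<lambda>p. \<phi> t (Fl (fst p) t (snd p))) \<in> borel_measurable (borel \<Otimes>\<^sub>M (borel :: 'b measure))"
  and mB: "(\<lambda>q. (fst (fst q) + snd q, J (fst (fst q) + snd q) (Fl (fst (fst q)) (fst (fst q) + snd q) (snd (fst q)))))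
      \<in> measurable ((borel \<Otimes>\<^sub>M (borel :: 'b measure)) \<Otimes>\<^sub>M borel) (borel \<Otimes>\<^sub>M borel)"
  and nonneg: "\<And>u st. \<phi> u st \<ge> 0"
  and H: "\<And>s st. 0 \<le> s \<Longrightarrow> s \<le> t \<Longrightarrow> (\<integral>\<^sup>+e. (if t < s + e then ennreal (\<phi> t (Fl s t st))
            else ennreal (\<phi> (s+e) (J (s+e) (Fl s (s+e) st)))) \<partial>Expo) \<le> ennreal (\<phi> s st)"
  shows "0 \<le> s \<Longrightarrow> s \<le> t \<Longrightarrow> (\<integral>\<^sup>+\<omega>. V \<phi> Fl J t n s st \<omega> \<partial>stream_space Expo) \<le> ennreal (\<phi> s st)"
proof (induction n arbitrary: s st)
  interpret E: prob_space Expo by (rule prob_Expo)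
  interpret S: prob_space "stream_space Expo" by (rule E.prob_space_stream_space)
  have mV: "(\<lambda>\<omega>. V \<phi> Fl J t m s st \<omega>) \<in> borel_measurable (stream_space Expo)" for m s st
  proof -
    have "(\<lambda>\<omega>. ((s, st), \<omega>)) \<in> measurable (stream_space Expo) ((borel \<Otimes>\<^sub>M (borel :: 'b measure)) \<Otimes>\<^sub>M stream_space Expo)"
      by measurable
    from measurable_compose[OF this V_meas[where \<phi>=\<phi> and Fl=Fl and J=J and t=t and n=m, OF mA mB]] show ?thesis by simp
  qed
  have split: "(\<integral>\<^sup>+\<omega>. V \<phi> Fl J t m s st \<omega> \<partial>stream_space Expo)
     = (\<integral>\<^sup>+e. (\<integral>\<^sup>+\<omega>. V \<phi> Fl J t m s st (e ## \<omega>) \<partial>stream_space Expo) \<partial>Expo)" for m s st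
    by (rule E.nn_integral_stream_space[OF mV])
  {
    case 0
    have "(\<integral>\<^sup>+\<omega>. V \<phi> Fl J t 0 s st \<omega> \<partial>stream_space Expo)
       \<le> (\<integral>\<^sup>+e. (if t < s + e then ennreal (\<phi> t (Fl s t st))
            else ennreal (\<phi> (s+e) (J (s+e) (Fl s (s+e) st)))) \<partial>Expo)"
      unfolding split
      by (intro nn_integral_mono) (auto simp: S.emeasure_space_1)
    also have "\<dots> \<le> ennreal (\<phi> s st)" using H 0 by blast
    finally show ?case .
  next
    case (Suc n)
    have "(\<integral>\<^sup>+\<omega>. V \<phi> Fl J t (Suc n) s st \<omega> \<partial>stream_space Expo)
       \<le> (\<integral>\<^sup>+e. (if t < s + e then ennreal (\<phi> t (Fl s t st))
            else ennreal (\<phi> (s+e) (J (s+e) (Fl s (s+e) st)))) \<partial>Expo)"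
      unfolding split
    proof (intro nn_integral_mono_AE)
      show "AE e in Expo. (\<integral>\<^sup>+\<omega>. V \<phi> Fl J t (Suc n) s st (e ## \<omega>) \<partial>stream_space Expo)
         \<le> (if t < s + e then ennreal (\<phi> t (Fl s t st))
            else ennreal (\<phi> (s+e) (J (s+e) (Fl s (s+e) st))))"
        using AE_Expo_pos
      proof eventually_elim
      case (elim e)
      show "(\<integral>\<^sup>+\<omega>. V \<phi> Fl J t (Suc n) s st (e ## \<omega>) \<partial>stream_space Expo)
         \<le> (if t < s + e then ennreal (\<phi> t (Fl s t st))
            else ennreal (\<phi> (s+e) (J (s+e) (Fl s (s+e) st))))"
      proof (cases "t < s + e")
        case True
        then show ?thesis by (simp add: S.emeasure_space_1)
      next
        case False
        then show ?thesis using Suc.IH[of "s + e"] Suc.prems elim by simp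
      qed
      qed
    qed
    also have "\<dots> \<le> ennreal (\<phi> s st)" using H Suc by blast
    finally show ?case .
  }
qed


lemma Expo_split:
  fixes g :: "real \<Rightarrow> real" and c T :: real
  assumes c: "0 \<le> c" and T: "0 \<le> T" and g: "\<And>e. 0 \<le> g e"
    and gm: "g \<in> borel_measurable borel"
    and gc: "continuous_on {0..T} (\<lambda>e. exp (-e) * g e)"
  shows "(\<integral>\<^sup>+e. (if T < e then ennreal c else ennreal (g e)) \<partial>Expo)
       = ennreal (c * exp (-T) + integral {0..T} (\<lambda>e. exp (-e) * g e))"
proof -
  have [measurable]: "g \<in> borel_measurable borel" by fact
  have "(\<integral>\<^sup>+e. (if T < e then ennreal c else ennreal (g e)) \<partial>Expo)
      = (\<integral>\<^sup>+e. ennreal (exponential_density 1 e) * (if T < e then ennreal c else ennreal (g e)) \<partial>lborel)"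
    by (subst nn_integral_density) auto
  also have "\<dots> = (\<integral>\<^sup>+e. ennreal (c * exp (-e)) * indicator {T..} e + ennreal (exp (-e) * g e) * indicator {0..T} e \<partial>lborel)"
  proof (rule nn_integral_cong_AE)
    show "AE e in lborel. ennreal (exponential_density 1 e) * (if T < e then ennreal c else ennreal (g e))
       = ennreal (c * exp (-e)) * indicator {T..} e + ennreal (exp (-e) * g e) * indicator {0..T} e"
      using AE_lborel_singleton[of T]
    proof eventually_elim
      case (elim e)
      show ?case
        using elim T c g[of e]
        by (auto simp: exponential_density_def indicator_def ennreal_mult[symmetric] mult.commute)
    qed
  qed
  also have "\<dots> = (\<integral>\<^sup>+e. ennreal (c * exp (-e)) * indicator {T..} e \<partial>lborel)
       + (\<integral>\<^sup>+e. ennreal (exp (-e) * g e) * indicator {0..T} e \<partial>lborel)"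
    by (rule nn_integral_add) auto
  also have "(\<integral>\<^sup>+e. ennreal (c * exp (-e)) * indicator {T..} e \<partial>lborel) = ennreal (c * exp (-T))"
  proof (rule nn_integral_has_integral_lebesgue')
    show "((\<lambda>e. c * exp (-e)) has_integral (c * exp (-T))) {T..}"
      using has_integral_mult_right[OF has_integral_exp_minus_to_infinity[of 1 T], of c] by simp
  qed (use c in auto)
  also have "(\<integral>\<^sup>+e. ennreal (exp (-e) * g e) * indicator {0..T} e \<partial>lborel) = ennreal (integral {0..T} (\<lambda>e. exp (-e) * g e))"
  proof (rule nn_integral_has_integral_lebesgue')
    show "((\<lambda>e. exp (-e) * g e) has_integral (integral {0..T} (\<lambda>e. exp (-e) * g e))) {0..T}"
      using integrable_continuous_interval[OF gc] by (simp add: integrable_integral)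
  qed (use g in auto)
  also have "ennreal (c * exp (-T)) + ennreal (integral {0..T} (\<lambda>e. exp (-e) * g e))
      = ennreal (c * exp (-T) + integral {0..T} (\<lambda>e. exp (-e) * g e))"
    by (rule ennreal_plus[symmetric]) (use c g in \<open>auto intro!: integral_nonneg integrable_continuous_interval gc\<close>)
  finally show ?thesis .
qed

lemma ftc_dec:
  fixes h h' G :: "real \<Rightarrow> real" and T :: real
  assumes T: "0 \<le> T" and hc: "continuous_on {0..T} h" and Gc: "continuous_on {0..T} G"
    and hd: "\<And>v. 0 < v \<Longrightarrow> v < T \<Longrightarrow> (h has_real_derivative h' v) (at v)"
    and le: "\<And>v. 0 < v \<Longrightarrow> v < T \<Longrightarrow> h' v + G v \<le> 0"
  shows "h T + integral {0..T} G \<le> h 0"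
proof -
  define K where "K v = h v + integral {0..v} G" for v
  have "K T \<le> K 0"
  proof (rule DERIV_nonpos_imp_decreasing_open[OF T])
    fix v assume v: "0 < v" "v < T"
    have "((\<lambda>x. integral {0..x} G) has_real_derivative G v) (at v within {0..T})"
      by (rule integral_has_real_derivative[OF Gc]) (use v in auto)
    moreover have "at v within {0..T} = at v"
      by (rule at_within_interior) (use v in auto)
    ultimately have "((\<lambda>x. integral {0..x} G) has_real_derivative G v) (at v)" by simp
    then have "(K has_real_derivative h' v + G v) (at v)"
      unfolding K_def by (intro DERIV_add hd v)
    then show "\<exists>y. (K has_real_derivative y) (at v) \<and> y \<le> 0" using le[OF v] by blast
  next
    show "continuous_on {0..T} K"
      unfolding K_def
      by (intro continuous_on_add hc indefinite_integral_continuous_1 integrable_continuous_interval Gc)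
  qed
  then show ?thesis by (simp add: K_def)
qed


lemma grad_ineq:
  fixes f :: "'a::euclidean_space \<Rightarrow> real"
  assumes cvx: "convex_on UNIV f" and der: "\<And>x. (f has_derivative (\<lambda>h. df x \<bullet> h)) (at x)"
  shows "f x + df x \<bullet> (y - x) \<le> f y"
proof -
  define \<phi> where "\<phi> s = f (x + s *\<^sub>R (y - x))" for s
  have d1: "((\<lambda>s. x + s *\<^sub>R (y - x)) has_derivative (\<lambda>s. s *\<^sub>R (y - x))) (at 0)"
    by (auto intro!: derivative_eq_intros)
  have "((\<lambda>s. f (x + s *\<^sub>R (y - x))) has_derivative (\<lambda>s. df x \<bullet> (s *\<^sub>R (y - x)))) (at 0)"
    using has_derivative_compose[OF d1, of f "\<lambda>h. df x \<bullet> h"] der[of x] by simp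
  moreover have "(\<lambda>s. df x \<bullet> (s *\<^sub>R (y - x))) = (*) (df x \<bullet> (y - x))"
    by (simp add: fun_eq_iff mult.commute)
  ultimately have "(\<phi> has_field_derivative (df x \<bullet> (y - x))) (at 0)"
    unfolding has_field_derivative_def \<phi>_def by simp
  then have "(\<phi> has_field_derivative (df x \<bullet> (y - x))) (at 0 within {0<..})"
    by (rule has_field_derivative_at_within)
  then have lim: "((\<lambda>s. (\<phi> s - \<phi> 0) / (s - 0)) \<longlongrightarrow> df x \<bullet> (y - x)) (at_right 0)"
    unfolding has_field_derivative_iff by simp
  have ev: "eventually (\<lambda>s. (\<phi> s - \<phi> 0) / (s - 0) \<le> f y - f x) (at_right (0::real))"
  proof (rule eventually_at_rightI[of 0 1])
    fix s :: real assume s: "s \<in> {0<..<1}"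
    have "x + s *\<^sub>R (y - x) = (1 - s) *\<^sub>R x + s *\<^sub>R y" by (simp add: algebra_simps)
    then have "\<phi> s \<le> (1 - s) * f x + s * f y"
      unfolding \<phi>_def using convex_onD[OF cvx, of s x y] s by simp
    then have "\<phi> s - \<phi> 0 \<le> s * (f y - f x)" by (simp add: \<phi>_def algebra_simps)
    then show "(\<phi> s - \<phi> 0) / (s - 0) \<le> f y - f x" using s by (simp add: divide_le_eq mult.commute)
  qed simp
  have "df x \<bullet> (y - x) \<le> f y - f x"
    by (rule tendsto_upperbound[OF lim ev]) simp
  then show ?thesis by simp
qed

lemma cocoercive:
  fixes f :: "'a::euclidean_space \<Rightarrow> real"
  assumes cvx: "convex_on UNIV f" and der: "\<And>x. (f has_derivative (\<lambda>h. df x \<bullet> h)) (at x)"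
    and L: "L > 0" and sm: "L_smooth L f df"
  shows "f x + df x \<bullet> (y - x) + (norm (df y - df x))\<^sup>2 / (2 * L) \<le> f y"
proof -
  define g where "g = df y - df x"
  define y' where "y' = y - (1 / L) *\<^sub>R g"
  have "f x + df x \<bullet> (y' - x) \<le> f y'" by (rule grad_ineq[OF cvx der])
  moreover have "f y' \<le> f y + df y \<bullet> (y' - y) + L / 2 * (norm (y' - y))\<^sup>2"
    using sm unfolding L_smooth_def by blast
  ultimately have 1: "f x + df x \<bullet> (y' - x) \<le> f y + df y \<bullet> (y' - y) + L / 2 * (norm (y' - y))\<^sup>2" by linarith
  have 2: "df x \<bullet> (y' - x) = df x \<bullet> (y - x) - (df x \<bullet> g) / L"
    by (simp add: y'_def inner_diff_right)
  have 3: "df y \<bullet> (y' - y) = - (df y \<bullet> g) / L"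
    by (simp add: y'_def)
  have 4: "L / 2 * (norm (y' - y))\<^sup>2 = (norm g)\<^sup>2 / (2 * L)"
  proof -
    have "norm (y' - y) = (1/L) * norm g" using L by (simp add: y'_def)
    then show ?thesis using L by (simp add: power2_eq_square field_simps)
  qed
  have 5: "(norm g)\<^sup>2 / L = (df y \<bullet> g) / L - (df x \<bullet> g) / L"
    by (simp add: g_def power2_norm_eq_inner inner_diff_left diff_divide_distrib)
  have 6: "(norm g)\<^sup>2 / L = 2 * ((norm g)\<^sup>2 / (2 * L))" using L by simp
  from 1 2 3 4 5 6 show ?thesis unfolding g_def[symmetric] by linarith
qed

lemma df_lipschitz:
  fixes f :: "'a::euclidean_space \<Rightarrow> real"
  assumes cvx: "convex_on UNIV f" and der: "\<And>x. (f has_derivative (\<lambda>h. df x \<bullet> h)) (at x)"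
    and L: "L > 0" and sm: "L_smooth L f df"
  shows "norm (df y - df x) \<le> L * norm (y - x)"
proof -
  have a: "f x + df x \<bullet> (y - x) + (norm (df y - df x))\<^sup>2 / (2 * L) \<le> f y"
    by (rule cocoercive[OF assms])
  have b: "f y + df y \<bullet> (x - y) + (norm (df x - df y))\<^sup>2 / (2 * L) \<le> f x"
    by (rule cocoercive[OF assms])
  have nn: "norm (df x - df y) = norm (df y - df x)" by (rule norm_minus_commute)
  have "df x \<bullet> (y - x) + df y \<bullet> (x - y) = - ((df y - df x) \<bullet> (y - x))"
    by (simp add: algebra_simps inner_diff_left inner_diff_right inner_commute)
  with a b nn have "(norm (df y - df x))\<^sup>2 / L \<le> (df y - df x) \<bullet> (y - x)"
    by (simp add: field_simps)
  also have "\<dots> \<le> norm (df y - df x) * norm (y - x)" by (rule norm_cauchy_schwarz)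
  finally have c: "(norm (df y - df x))\<^sup>2 / L \<le> norm (df y - df x) * norm (y - x)" .
  show ?thesis
  proof (cases "norm (df y - df x) = 0")
    case True then show ?thesis using L by simp
  next
    case False
    then have p: "norm (df y - df x) > 0" by simp
    from c L have "(norm (df y - df x))\<^sup>2 \<le> L * (norm (df y - df x) * norm (y - x))"
      by (simp add: divide_le_eq mult.commute)
    then have "norm (df y - df x) * norm (df y - df x) \<le> norm (df y - df x) * (L * norm (y - x))"
      by (simp add: power2_eq_square algebra_simps)
    then show ?thesis using p by simp
  qed
qed

lemma df_continuous:
  fixes f :: "'a::euclidean_space \<Rightarrow> real"
  assumes cvx: "convex_on UNIV f" and der: "\<And>x. (f has_derivative (\<lambda>h. df x \<bullet> h)) (at x)"
    and L: "L > 0" and sm: "L_smooth L f df"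
  shows "continuous_on UNIV df"
proof (rule lipschitz_on_continuous_on)
  show "L-lipschitz_on UNIV df"
    by (rule lipschitz_onI) (use df_lipschitz[OF assms] L in \<open>auto simp: dist_norm\<close>)
qed


definition Fl1 :: "real \<Rightarrow> real \<Rightarrow> 'a::euclidean_space \<times> 'a \<Rightarrow> 'a \<times> 'a" where
  "Fl1 s u p = (snd p + (s / u)\<^sup>2 *\<^sub>R (fst p - snd p), snd p)"
definition J1 :: "('a::euclidean_space \<Rightarrow> 'a) \<Rightarrow> real \<Rightarrow> real \<Rightarrow> 'a \<times> 'a \<Rightarrow> 'a \<times> 'a" where
  "J1 df L u p = (fst p - (1 / L) *\<^sub>R df (fst p), snd p - (u / (2 * L)) *\<^sub>R df (fst p))"
definition phi1 :: "('a::euclidean_space \<Rightarrow> real) \<Rightarrow> real \<Rightarrow> 'a \<Rightarrow> real \<Rightarrow> 'a \<times> 'a \<Rightarrow> real" where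
  "phi1 f L xs u p = u\<^sup>2 * (f (fst p) - f xs) + 2 * L * (norm (snd p - xs))\<^sup>2"

lemma norm_sub_scale_sq:
  fixes w g :: "'a::euclidean_space"
  shows "(norm (w - a *\<^sub>R g))\<^sup>2 = (norm w)\<^sup>2 - 2 * a * (g \<bullet> w) + a\<^sup>2 * (norm g)\<^sup>2"
  unfolding power2_norm_eq_inner by (simp add: inner_diff_left inner_diff_right inner_commute power2_eq_square algebra_simps)

lemma smooth_step:
  fixes f :: "'a::euclidean_space \<Rightarrow> real"
  assumes L: "L > 0" and sm: "L_smooth L f df"
  shows "f (y - (1 / L) *\<^sub>R df y) \<le> f y - (norm (df y))\<^sup>2 / (2 * L)"
proof -
  have "f (y - (1 / L) *\<^sub>R df y) \<le> f y + df y \<bullet> ((y - (1 / L) *\<^sub>R df y) - y) + L / 2 * (norm ((y - (1 / L) *\<^sub>R df y) - y))\<^sup>2"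
    using sm unfolding L_smooth_def by blast
  also have "\<dots> = f y - (norm (df y))\<^sup>2 / (2 * L)"
  proof -
    have a: "df y \<bullet> ((y - (1 / L) *\<^sub>R df y) - y) = - (norm (df y))\<^sup>2 / L"
      by (simp add: power2_norm_eq_inner)
    have b: "(norm ((y - (1 / L) *\<^sub>R df y) - y))\<^sup>2 = (norm (df y))\<^sup>2 / L\<^sup>2"
      using L by (simp add: power_divide)
    show ?thesis unfolding a b using L by (simp add: field_simps power2_eq_square)
  qed
  finally show ?thesis .
qed

lemma key1:
  fixes f :: "'a::euclidean_space \<Rightarrow> real"
  assumes cvx: "convex_on UNIV f" and der: "\<And>x. (f has_derivative (\<lambda>h. df x \<bullet> h)) (at x)"
    and L: "L > 0" and sm: "L_smooth L f df" and u: "0 \<le> u"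
  shows "phi1 f L xs u (J1 df L u (y, z)) - phi1 f L xs u (y, z) + 2 * u * (f y - f xs) + 2 * u * (df y \<bullet> (z - y)) \<le> 0"
proof -
  define g where "g = df y"
  define w where "w = z - xs"
  have A: "f (y - (1 / L) *\<^sub>R g) \<le> f y - (norm g)\<^sup>2 / (2 * L)"
    unfolding g_def by (rule smooth_step[OF L sm])
  have C: "f y + g \<bullet> (xs - y) \<le> f xs"
    unfolding g_def by (rule grad_ineq[OF cvx der])
  have W: "(norm (z - (u / (2 * L)) *\<^sub>R g - xs))\<^sup>2 = (norm w)\<^sup>2 - 2 * (u / (2 * L)) * (g \<bullet> w) + (u / (2 * L))\<^sup>2 * (norm g)\<^sup>2"
    unfolding w_def[symmetric] using norm_sub_scale_sq[of w "u / (2 * L)" g]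
    by (simp add: w_def algebra_simps)
  have Q: "g \<bullet> (z - y) = g \<bullet> w + g \<bullet> (xs - y)"
    by (simp add: w_def inner_diff_right)
  have e1: "phi1 f L xs u (J1 df L u (y, z)) = u\<^sup>2 * (f (y - (1 / L) *\<^sub>R g) - f xs) + 2 * L * (norm (z - (u / (2 * L)) *\<^sub>R g - xs))\<^sup>2"
    by (simp add: phi1_def J1_def g_def)
  have e2: "phi1 f L xs u (y, z) = u\<^sup>2 * (f y - f xs) + 2 * L * (norm w)\<^sup>2"
    by (simp add: phi1_def w_def)
  have W2: "2 * L * (norm (z - (u / (2 * L)) *\<^sub>R g - xs))\<^sup>2 = 2 * L * (norm w)\<^sup>2 - 2 * u * (g \<bullet> w) + u\<^sup>2 * ((norm g)\<^sup>2 / (2 * L))"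
    unfolding W using L by (simp add: field_simps power2_eq_square)
  have "phi1 f L xs u (J1 df L u (y, z)) - phi1 f L xs u (y, z) + 2 * u * (f y - f xs) + 2 * u * (df y \<bullet> (z - y))
     = u\<^sup>2 * (f (y - (1 / L) *\<^sub>R g) - f y + (norm g)\<^sup>2 / (2 * L)) + 2 * u * (f y + g \<bullet> (xs - y) - f xs)"
    unfolding e1 e2 W2 g_def[symmetric] Q by (simp add: algebra_simps)
  also have "\<dots> \<le> 0"
  proof -
    have "u\<^sup>2 * (f (y - (1 / L) *\<^sub>R g) - f y + (norm g)\<^sup>2 / (2 * L)) \<le> 0"
      using A by (simp add: mult_nonneg_nonpos)
    moreover have "2 * u * (f y + g \<bullet> (xs - y) - f xs) \<le> 0"
      using C u by (simp add: mult_nonneg_nonpos)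
    ultimately show ?thesis by linarith
  qed
  finally show ?thesis .
qed


lemma f_chain:
  fixes f :: "'a::euclidean_space \<Rightarrow> real"
  assumes der: "\<And>x. (f has_derivative (\<lambda>h. df x \<bullet> h)) (at x)"
    and X: "(X has_vector_derivative X') (at v)"
  shows "((\<lambda>v. f (X v)) has_real_derivative (df (X v) \<bullet> X')) (at v)"
proof -
  have "((\<lambda>v. f (X v)) has_derivative (\<lambda>h. df (X v) \<bullet> (h *\<^sub>R X'))) (at v)"
    using has_derivative_compose[OF X[unfolded has_vector_derivative_def] der] .
  moreover have "(\<lambda>h. df (X v) \<bullet> (h *\<^sub>R X')) = (*) (df (X v) \<bullet> X')"
    by (simp add: fun_eq_iff mult.commute)
  ultimately show ?thesis unfolding has_field_derivative_def by simp
qed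

lemma c1_deriv:
  fixes s v :: real
  assumes "s + v > 0"
  shows "((\<lambda>v. (s / (s + v))\<^sup>2) has_real_derivative (- 2 * s\<^sup>2 / (s + v)^3)) (at v)"
proof -
  have u: "s + v \<noteq> 0" using assms by simp
  have "((\<lambda>v. s / (s + v)) has_real_derivative (- s / (s + v)\<^sup>2)) (at v)"
    using u by (auto intro!: derivative_eq_intros simp: field_simps power2_eq_square)
  from DERIV_power[OF this, of 2]
  have "((\<lambda>v. (s / (s + v))\<^sup>2) has_real_derivative (real 2 * (- s / (s + v)\<^sup>2 * (s / (s + v)) ^ (2 - Suc 0)))) (at v)" .
  moreover have "real 2 * (- s / (s + v)\<^sup>2 * (s / (s + v)) ^ (2 - Suc 0)) = - 2 * s\<^sup>2 / (s + v)^3"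
    using u by (simp add: field_simps power2_eq_square power3_eq_cube)
  ultimately show ?thesis by metis
qed

lemma Fl1_deriv:
  fixes w z :: "'a::euclidean_space"
  assumes "s + v > 0"
  shows "((\<lambda>v. z + (s / (s + v))\<^sup>2 *\<^sub>R w) has_vector_derivative ((- 2 * s\<^sup>2 / (s + v)^3) *\<^sub>R w)) (at v)"
  using has_vector_derivative_scaleR[OF c1_deriv[OF assms] has_vector_derivative_const[of w]]
  by (subst has_vector_derivative_add_const[of _ z, simplified add.commute]) simp


lemma f_cont:
  fixes f :: "'a::euclidean_space \<Rightarrow> real"
  assumes der: "\<And>x. (f has_derivative (\<lambda>h. df x \<bullet> h)) (at x)"
  shows "continuous_on UNIV f"
  by (rule continuous_at_imp_continuous_on) (use has_derivative_continuous[OF der] in blast)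

lemma eqD_aux:
  fixes u s D :: real
  assumes "u > 0"
  shows "u\<^sup>2 * ((- 2 * s\<^sup>2 / u ^ 3) * D) = 2 * u * ((- (s / u)\<^sup>2) * D)"
  using assms by (simp add: field_simps power2_eq_square power3_eq_cube)

lemma lyap1:
  fixes f :: "'a::euclidean_space \<Rightarrow> real"
  assumes cvx: "convex_on UNIV f" and der: "\<And>x. (f has_derivative (\<lambda>h. df x \<bullet> h)) (at x)"
    and L: "L > 0" and sm: "L_smooth L f df" and s: "0 \<le> s" "s \<le> t"
  shows "exp (-(t-s)) * phi1 f L xs t (Fl1 s t p)
     + integral {0..t-s} (\<lambda>e. exp (-e) * phi1 f L xs (s+e) (J1 df L (s+e) (Fl1 s (s+e) p)))
     \<le> phi1 f L xs s p"
    and "continuous_on {0..t-s} (\<lambda>e. exp (-e) * phi1 f L xs (s+e) (J1 df L (s+e) (Fl1 s (s+e) p)))"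
proof -
  obtain x z where p: "p = (x, z)" by (cases p)
  define T where "T = t - s"
  have T: "0 \<le> T" using s by (simp add: T_def)
  define X where "X v = z + (s / (s + v))\<^sup>2 *\<^sub>R (x - z)" for v
  have FlX: "Fl1 s (s + v) p = (X v, z)" for v by (simp add: Fl1_def X_def p)
  define h where "h v = exp (-v) * phi1 f L xs (s + v) (X v, z)" for v
  define G where "G v = exp (-v) * phi1 f L xs (s + v) (J1 df L (s + v) (X v, z))" for v
  define h' where "h' v = - h v + exp (-v) * (2 * (s + v) * (f (X v) - f xs)
       + (s + v)\<^sup>2 * (df (X v) \<bullet> ((- 2 * s\<^sup>2 / (s + v)^3) *\<^sub>R (x - z))))" for v
  have fc: "continuous_on UNIV f" by (rule f_cont[OF der])
  have dfc: "continuous_on UNIV df" by (rule df_continuous[OF cvx der L sm])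
  have Xc: "continuous_on {0..T} X"
  proof (cases "s = 0")
    case True then show ?thesis by (simp add: X_def)
  next
    case False
    with s have "s > 0" by simp
    then show ?thesis by (auto simp: X_def intro!: continuous_intros)
  qed
  have fXc: "continuous_on {0..T} (\<lambda>v. f (X v))"
    by (rule continuous_on_compose2[OF fc Xc]) auto
  have dXc: "continuous_on {0..T} (\<lambda>v. df (X v))"
    by (rule continuous_on_compose2[OF dfc Xc]) auto
  have fJc: "continuous_on {0..T} (\<lambda>v. f (X v - (1 / L) *\<^sub>R df (X v)))"
    by (rule continuous_on_compose2[OF fc]) (auto intro!: continuous_intros Xc dXc)
  have hc: "continuous_on {0..T} h"
    unfolding h_def phi1_def by (auto intro!: continuous_intros fXc)
  have Gc: "continuous_on {0..T} G"
    unfolding G_def phi1_def J1_def using L by (auto intro!: continuous_intros fJc dXc)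
  have hd: "(h has_real_derivative h' v) (at v)" if v: "0 < v" "v < T" for v
  proof -
    have sv: "s + v > 0" using s v by simp
    have Xd: "(X has_vector_derivative ((- 2 * s\<^sup>2 / (s + v)^3) *\<^sub>R (x - z))) (at v)"
      unfolding X_def by (rule Fl1_deriv[OF sv])
    have fX: "((\<lambda>v. f (X v)) has_real_derivative (df (X v) \<bullet> ((- 2 * s\<^sup>2 / (s + v)^3) *\<^sub>R (x - z)))) (at v)"
      by (rule f_chain[OF der Xd])
    show ?thesis
      unfolding h_def h'_def phi1_def
      by (auto intro!: derivative_eq_intros fX simp: algebra_simps)
  qed
  have le: "h' v + G v \<le> 0" if v: "0 < v" "v < T" for v
  proof -
    have sv: "s + v > 0" using s v by simp
    have eqD: "(s + v)\<^sup>2 * (df (X v) \<bullet> ((- 2 * s\<^sup>2 / (s + v)^3) *\<^sub>R (x - z))) = 2 * (s + v) * (df (X v) \<bullet> (z - X v))"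
    proof -
      have zX: "z - X v = (- (s / (s + v))\<^sup>2) *\<^sub>R (x - z)" by (simp add: X_def algebra_simps)
      show ?thesis unfolding zX inner_scaleR_right
        by (rule eqD_aux[OF sv])
    qed
    have K: "phi1 f L xs (s + v) (J1 df L (s + v) (X v, z)) - phi1 f L xs (s + v) (X v, z)
        + 2 * (s + v) * (f (X v) - f xs) + 2 * (s + v) * (df (X v) \<bullet> (z - X v)) \<le> 0"
      by (rule key1[OF cvx der L sm]) (use sv in simp)
    have "h' v + G v = exp (-v) * (phi1 f L xs (s + v) (J1 df L (s + v) (X v, z)) - phi1 f L xs (s + v) (X v, z)
        + 2 * (s + v) * (f (X v) - f xs) + 2 * (s + v) * (df (X v) \<bullet> (z - X v)))"
      unfolding h'_def G_def h_def eqD by (simp add: algebra_simps)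
    also have "\<dots> \<le> 0" using K by (simp add: mult_nonneg_nonpos)
    finally show ?thesis .
  qed
  have main: "h T + integral {0..T} G \<le> h 0"
    by (rule ftc_dec[OF T hc Gc hd le])
  have hT: "h T = exp (-(t-s)) * phi1 f L xs t (Fl1 s t p)"
    using FlX[of T] by (simp add: h_def T_def)
  have h0: "h 0 = phi1 f L xs s p"
  proof (cases "s = 0")
    case True then show ?thesis by (simp add: h_def X_def phi1_def p)
  next
    case False then show ?thesis by (simp add: h_def X_def phi1_def p)
  qed
  have iG: "integral {0..T} G = integral {0..t-s} (\<lambda>e. exp (-e) * phi1 f L xs (s+e) (J1 df L (s+e) (Fl1 s (s+e) p)))"
    unfolding G_def[abs_def] FlX T_def ..
  show "exp (-(t-s)) * phi1 f L xs t (Fl1 s t p)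
     + integral {0..t-s} (\<lambda>e. exp (-e) * phi1 f L xs (s+e) (J1 df L (s+e) (Fl1 s (s+e) p)))
     \<le> phi1 f L xs s p" using main hT h0 iG by simp
  show "continuous_on {0..t-s} (\<lambda>e. exp (-e) * phi1 f L xs (s+e) (J1 df L (s+e) (Fl1 s (s+e) p)))"
    using Gc unfolding G_def[abs_def] FlX T_def .
qed


definition Fl2 :: "real \<Rightarrow> real \<Rightarrow> real \<Rightarrow> 'a::euclidean_space \<times> 'a \<Rightarrow> 'a \<times> 'a" where
  "Fl2 a s u p = ((1/2) *\<^sub>R (fst p + snd p) + (exp (-2*a*(u-s)) / 2) *\<^sub>R (fst p - snd p),
                  (1/2) *\<^sub>R (fst p + snd p) - (exp (-2*a*(u-s)) / 2) *\<^sub>R (fst p - snd p))"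
definition J2 :: "('a::euclidean_space \<Rightarrow> 'a) \<Rightarrow> real \<Rightarrow> real \<Rightarrow> real \<Rightarrow> 'a \<times> 'a \<Rightarrow> 'a \<times> 'a" where
  "J2 df L c u p = (fst p - (1 / L) *\<^sub>R df (fst p), snd p - c *\<^sub>R df (fst p))"
definition phi2 :: "('a::euclidean_space \<Rightarrow> real) \<Rightarrow> real \<Rightarrow> real \<Rightarrow> 'a \<Rightarrow> real \<Rightarrow> 'a \<times> 'a \<Rightarrow> real" where
  "phi2 f \<mu> a xs u p = exp (a * u) * (f (fst p) - f xs + \<mu> / 2 * (norm (snd p - xs))\<^sup>2)"

lemma key2:
  fixes f :: "'a::euclidean_space \<Rightarrow> real"
  assumes L: "L > 0" and mu: "\<mu> > 0" and sm: "L_smooth L f df" and sc: "strongly_convex \<mu> f df"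
    and a: "a = sqrt (\<mu> / L)" and c: "c = 1 / sqrt (\<mu> * L)"
  shows "(f (y - (1/L) *\<^sub>R df y) - f xs + \<mu>/2 * (norm (z - c *\<^sub>R df y - xs))\<^sup>2)
       - (f y - f xs + \<mu>/2 * (norm (z - xs))\<^sup>2)
       + a * (f y - f xs + \<mu>/2 * (norm (z - xs))\<^sup>2) + a * (df y \<bullet> (z - y))
       + a * \<mu> * ((z - xs) \<bullet> (y - z)) \<le> 0"
proof -
  define g where "g = df y"
  define w where "w = z - xs"
  define q where "q = y - xs"
  have muc: "\<mu> * c = a"
  proof -
    have sq: "sqrt \<mu> * sqrt \<mu> = \<mu>" using mu by simp
    have p: "sqrt \<mu> > 0" "sqrt L > 0" using mu L by auto
    have "\<mu> * c = (sqrt \<mu> * sqrt \<mu>) / (sqrt \<mu> * sqrt L)" unfolding sq by (simp add: c real_sqrt_mult)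
    also have "\<dots> = sqrt \<mu> / sqrt L" using p by (simp add: field_simps)
    finally show ?thesis by (simp add: a real_sqrt_divide)
  qed
  have muc2: "\<mu> * c\<^sup>2 = 1 / L"
    using mu L by (simp add: c power_divide)
  have a0: "a \<ge> 0" using mu L by (simp add: a)
  have A: "f (y - (1 / L) *\<^sub>R g) \<le> f y - (norm g)\<^sup>2 / (2 * L)"
    unfolding g_def by (rule smooth_step[OF L sm])
  have S: "f y + g \<bullet> (xs - y) + \<mu> / 2 * (norm (xs - y))\<^sup>2 \<le> f xs"
    using sc unfolding strongly_convex_def g_def by blast
  have Nw: "(norm (z - c *\<^sub>R g - xs))\<^sup>2 = (norm w)\<^sup>2 - 2 * c * (g \<bullet> w) + c\<^sup>2 * (norm g)\<^sup>2"
    using norm_sub_scale_sq[of w c g] by (simp add: w_def algebra_simps)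
  have Nw2: "\<mu>/2 * (norm (z - c *\<^sub>R g - xs))\<^sup>2 = \<mu>/2 * (norm w)\<^sup>2 - a * (g \<bullet> w) + (norm g)\<^sup>2 / (2 * L)"
  proof -
    have "\<mu>/2 * (norm (z - c *\<^sub>R g - xs))\<^sup>2 = \<mu>/2 * (norm w)\<^sup>2 - (\<mu> * c) * (g \<bullet> w) + (\<mu> * c\<^sup>2) * (norm g)\<^sup>2 / 2"
      unfolding Nw by (simp add: algebra_simps)
    then show ?thesis unfolding muc muc2 by simp
  qed
  have Q1: "(norm (xs - y))\<^sup>2 = (norm q)\<^sup>2" by (simp add: q_def norm_minus_commute)
  have Q2: "g \<bullet> (z - y) = g \<bullet> w + g \<bullet> (xs - y)" by (simp add: w_def inner_diff_right)
  have Q3: "w \<bullet> (y - z) = w \<bullet> q - (norm w)\<^sup>2"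
    by (simp add: w_def q_def inner_diff_right inner_diff_left power2_norm_eq_inner inner_commute)
  have Q4: "(norm (w - q))\<^sup>2 = (norm w)\<^sup>2 - 2 * (w \<bullet> q) + (norm q)\<^sup>2"
    by (simp add: power2_norm_eq_inner inner_diff_right inner_diff_left inner_commute)
  have "(f (y - (1/L) *\<^sub>R df y) - f xs + \<mu>/2 * (norm (z - c *\<^sub>R df y - xs))\<^sup>2)
       - (f y - f xs + \<mu>/2 * (norm (z - xs))\<^sup>2)
       + a * (f y - f xs + \<mu>/2 * (norm (z - xs))\<^sup>2) + a * (df y \<bullet> (z - y))
       + a * \<mu> * ((z - xs) \<bullet> (y - z))
     = (f (y - (1 / L) *\<^sub>R g) - f y + (norm g)\<^sup>2 / (2 * L))
       + a * (f y + g \<bullet> (xs - y) + \<mu> / 2 * (norm (xs - y))\<^sup>2 - f xs)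
       - a * \<mu> / 2 * (norm (w - q))\<^sup>2"
    unfolding g_def[symmetric] Nw2 Q1 Q2 w_def[symmetric] Q3 Q4 by (simp add: algebra_simps)
  also have "\<dots> \<le> 0"
  proof -
    have "a * (f y + g \<bullet> (xs - y) + \<mu> / 2 * (norm (xs - y))\<^sup>2 - f xs) \<le> 0"
      using S a0 by (simp add: mult_nonneg_nonpos)
    moreover have "0 \<le> a * \<mu> / 2 * (norm (w - q))\<^sup>2" using a0 mu by simp
    ultimately show ?thesis using A by linarith
  qed
  finally show ?thesis .
qed

lemma half_sum_diff:
  fixes x z :: "'a::real_vector"
  shows "(1/2) *\<^sub>R (x + z) + (1/2) *\<^sub>R (x - z) = x" and "(1/2) *\<^sub>R (x + z) - (1/2) *\<^sub>R (x - z) = z"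
proof -
  have "(1/2) *\<^sub>R (x + z) + (1/2) *\<^sub>R (x - z) = ((1/2) + (1/2)) *\<^sub>R x"
    by (simp only: scaleR_add_right scaleR_diff_right scaleR_add_left) (simp add: algebra_simps)
  then show "(1/2) *\<^sub>R (x + z) + (1/2) *\<^sub>R (x - z) = x" by simp
  have "(1/2) *\<^sub>R (x + z) - (1/2) *\<^sub>R (x - z) = ((1/2) + (1/2)) *\<^sub>R z"
    by (simp only: scaleR_add_right scaleR_diff_right scaleR_add_left) (simp add: algebra_simps)
  then show "(1/2) *\<^sub>R (x + z) - (1/2) *\<^sub>R (x - z) = z" by simp
qed

lemma lyap2:
  fixes f :: "'a::euclidean_space \<Rightarrow> real"
  assumes cvx: "convex_on UNIV f" and der: "\<And>x. (f has_derivative (\<lambda>h. df x \<bullet> h)) (at x)"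
    and L: "L > 0" and sm: "L_smooth L f df" and mu: "\<mu> > 0" and sc: "strongly_convex \<mu> f df"
    and a: "a = sqrt (\<mu> / L)" and c: "c = 1 / sqrt (\<mu> * L)" and s: "s \<le> t"
  shows "exp (-(t-s)) * phi2 f \<mu> a xs t (Fl2 a s t p)
     + integral {0..t-s} (\<lambda>e. exp (-e) * phi2 f \<mu> a xs (s+e) (J2 df L c (s+e) (Fl2 a s (s+e) p)))
     \<le> phi2 f \<mu> a xs s p"
    and "continuous_on {0..t-s} (\<lambda>e. exp (-e) * phi2 f \<mu> a xs (s+e) (J2 df L c (s+e) (Fl2 a s (s+e) p)))"
proof -
  obtain x z where p: "p = (x, z)" by (cases p)
  define T where "T = t - s"
  have T: "0 \<le> T" using s by (simp add: T_def)
  define m where "m = (1/2) *\<^sub>R (x + z)"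
  define d where "d = x - z"
  define Ee where "Ee v = exp (- (2 * a * v))" for v
  define X where "X v = m + (Ee v / 2) *\<^sub>R d" for v
  define Z where "Z v = m - (Ee v / 2) *\<^sub>R d" for v
  define A0 where "A0 = (norm (m - xs))\<^sup>2"
  define B0 where "B0 = (m - xs) \<bullet> d"
  define C0 where "C0 = (norm d)\<^sup>2 / 4"
  have FlX: "Fl2 a s (s + v) p = (X v, Z v)" for v by (simp add: Fl2_def X_def Z_def Ee_def m_def d_def p)
  have nZ: "(norm (Z v - xs))\<^sup>2 = A0 - Ee v * B0 + (Ee v)\<^sup>2 * C0" for v
  proof -
    have eqZ: "Z v - xs = (m - xs) - (Ee v / 2) *\<^sub>R d" by (simp add: Z_def algebra_simps)
    show ?thesis unfolding eqZ norm_sub_scale_sq A0_def B0_def C0_def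
      by (simp add: inner_commute power_divide algebra_simps)
  qed
  define F where "F v = f (X v) - f xs + \<mu> / 2 * (A0 - Ee v * B0 + (Ee v)\<^sup>2 * C0)" for v
  define h where "h v = exp (-v) * (exp (a * (s + v)) * F v)" for v
  define G where "G v = exp (-v) * phi2 f \<mu> a xs (s + v) (J2 df L c (s + v) (X v, Z v))" for v
  define h' where "h' v = - exp (-v) * (exp (a * (s + v)) * F v) + exp (-v) * (a * exp (a * (s + v)) * F v
      + exp (a * (s + v)) * (df (X v) \<bullet> ((- a * Ee v) *\<^sub>R d) + \<mu> / 2 * (- (- 2 * a * Ee v) * B0 + 2 * Ee v * (- 2 * a * Ee v) * C0)))" for v
  have hphi: "h v = exp (-v) * phi2 f \<mu> a xs (s + v) (X v, Z v)" for v
    by (simp add: h_def phi2_def F_def nZ)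
  have fc: "continuous_on UNIV f" by (rule f_cont[OF der])
  have dfc: "continuous_on UNIV df" by (rule df_continuous[OF cvx der L sm])
  have Xc: "continuous_on {0..T} X" by (auto simp: X_def Ee_def intro!: continuous_intros)
  have Zc: "continuous_on {0..T} Z" by (auto simp: Z_def Ee_def intro!: continuous_intros)
  have fXc: "continuous_on {0..T} (\<lambda>v. f (X v))"
    by (rule continuous_on_compose2[OF fc Xc]) auto
  have dXc: "continuous_on {0..T} (\<lambda>v. df (X v))"
    by (rule continuous_on_compose2[OF dfc Xc]) auto
  have fJc: "continuous_on {0..T} (\<lambda>v. f (X v - (1 / L) *\<^sub>R df (X v)))"
    by (rule continuous_on_compose2[OF fc]) (auto intro!: continuous_intros Xc dXc)
  have hc: "continuous_on {0..T} h"
    unfolding h_def F_def Ee_def by (auto intro!: continuous_intros fXc)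
  have Gc: "continuous_on {0..T} G"
    unfolding G_def phi2_def J2_def using L by (auto intro!: continuous_intros fJc dXc Zc)
  have hd: "(h has_real_derivative h' v) (at v)" if v: "0 < v" "v < T" for v
  proof -
    have Ed: "(Ee has_real_derivative (- 2 * a * Ee v)) (at v)"
      unfolding Ee_def by (auto intro!: derivative_eq_intros)
    have Xd: "(X has_vector_derivative ((- a * Ee v) *\<^sub>R d)) (at v)"
    proof -
      have "((\<lambda>v. (Ee v / 2) *\<^sub>R d) has_vector_derivative ((Ee v / 2) *\<^sub>R 0 + ((- 2 * a * Ee v) / 2) *\<^sub>R d)) (at v)"
        by (intro has_vector_derivative_scaleR has_vector_derivative_const DERIV_cdivide Ed)
      then have "((\<lambda>v. (Ee v / 2) *\<^sub>R d) has_vector_derivative ((- a * Ee v) *\<^sub>R d)) (at v)" by simp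
      then show ?thesis unfolding X_def
        by (subst has_vector_derivative_add_const[of _ m, simplified add.commute]) simp
    qed
    have fX: "((\<lambda>v. f (X v)) has_real_derivative (df (X v) \<bullet> ((- a * Ee v) *\<^sub>R d))) (at v)"
      by (rule f_chain[OF der Xd])
    show ?thesis
      unfolding h_def h'_def F_def
      by (auto intro!: derivative_eq_intros fX Ed simp: field_simps power2_eq_square)
  qed
  have le: "h' v + G v \<le> 0" if v: "0 < v" "v < T" for v
  proof -
    have e1: "df (X v) \<bullet> ((- a * Ee v) *\<^sub>R d) = a * (df (X v) \<bullet> (Z v - X v))"
    proof -
      have "Z v - X v = (- Ee v) *\<^sub>R d" by (simp add: X_def Z_def algebra_simps flip: scaleR_add_left)
      then show ?thesis by simp
    qed
    have e2: "\<mu> / 2 * (- (- 2 * a * Ee v) * B0 + 2 * Ee v * (- 2 * a * Ee v) * C0) = a * \<mu> * ((Z v - xs) \<bullet> (X v - Z v))"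
    proof -
      have XZ: "X v - Z v = Ee v *\<^sub>R d" by (simp add: X_def Z_def algebra_simps flip: scaleR_add_left)
      have "(Z v - xs) \<bullet> (Ee v *\<^sub>R d) = Ee v * B0 - 2 * (Ee v)\<^sup>2 * C0"
        using dot_square_norm[of d] by (simp add: Z_def B0_def C0_def inner_diff_left power2_eq_square algebra_simps)
      then show ?thesis unfolding XZ by (simp only:) (simp add: algebra_simps power2_eq_square)
    qed
    have K: "(f (X v - (1/L) *\<^sub>R df (X v)) - f xs + \<mu>/2 * (norm (Z v - c *\<^sub>R df (X v) - xs))\<^sup>2)
       - (f (X v) - f xs + \<mu>/2 * (norm (Z v - xs))\<^sup>2)
       + a * (f (X v) - f xs + \<mu>/2 * (norm (Z v - xs))\<^sup>2) + a * (df (X v) \<bullet> (Z v - X v))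
       + a * \<mu> * ((Z v - xs) \<bullet> (X v - Z v)) \<le> 0"
      by (rule key2[OF L mu sm sc a c])
    have FF: "F v = f (X v) - f xs + \<mu>/2 * (norm (Z v - xs))\<^sup>2" by (simp add: F_def nZ)
    have GG: "G v = exp (-v) * (exp (a * (s + v)) * (f (X v - (1/L) *\<^sub>R df (X v)) - f xs + \<mu>/2 * (norm (Z v - c *\<^sub>R df (X v) - xs))\<^sup>2))"
      by (simp add: G_def phi2_def J2_def)
    have "h' v + G v = exp (-v) * exp (a * (s + v)) * ((f (X v - (1/L) *\<^sub>R df (X v)) - f xs + \<mu>/2 * (norm (Z v - c *\<^sub>R df (X v) - xs))\<^sup>2)
       - (f (X v) - f xs + \<mu>/2 * (norm (Z v - xs))\<^sup>2)
       + a * (f (X v) - f xs + \<mu>/2 * (norm (Z v - xs))\<^sup>2) + a * (df (X v) \<bullet> (Z v - X v))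
       + a * \<mu> * ((Z v - xs) \<bullet> (X v - Z v)))"
      unfolding h'_def GG e1[symmetric] e2[symmetric] FF by (simp add: algebra_simps)
    also have "\<dots> \<le> 0" using K by (simp add: mult_nonneg_nonpos)
    finally show ?thesis .
  qed
  have main: "h T + integral {0..T} G \<le> h 0"
    by (rule ftc_dec[OF T hc Gc hd le])
  have hT: "h T = exp (-(t-s)) * phi2 f \<mu> a xs t (Fl2 a s t p)"
    using FlX[of T] by (simp add: hphi T_def)
  have h0: "h 0 = phi2 f \<mu> a xs s p"
    by (simp add: hphi X_def Z_def Ee_def m_def d_def p half_sum_diff)
  have iG: "integral {0..T} G = integral {0..t-s} (\<lambda>e. exp (-e) * phi2 f \<mu> a xs (s+e) (J2 df L c (s+e) (Fl2 a s (s+e) p)))"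
    unfolding G_def[abs_def] FlX T_def ..
  show "exp (-(t-s)) * phi2 f \<mu> a xs t (Fl2 a s t p)
     + integral {0..t-s} (\<lambda>e. exp (-e) * phi2 f \<mu> a xs (s+e) (J2 df L c (s+e) (Fl2 a s (s+e) p)))
     \<le> phi2 f \<mu> a xs s p" using main hT h0 iG by simp
  show "continuous_on {0..t-s} (\<lambda>e. exp (-e) * phi2 f \<mu> a xs (s+e) (J2 df L c (s+e) (Fl2 a s (s+e) p)))"
    using Gc unfolding G_def[abs_def] FlX T_def .
qed


lemma snth_to_stream[simp]: "to_stream X !! n = X n"
  by (simp add: to_stream_def)

lemma V_eq:
  assumes step: "\<And>k. st (Suc k) = J (\<tau> (Suc k)) (Fl (\<tau> k) (\<tau> (Suc k)) (st k))"
    and flow: "\<And>k. \<tau> k \<le> t \<Longrightarrow> t < \<tau> (Suc k) \<Longrightarrow> Y = Fl (\<tau> k) t (st k)"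
  shows "\<tau> j \<le> t \<Longrightarrow> t < \<tau> (j + n + 1) \<Longrightarrow>
     V \<phi> Fl J t n (\<tau> j) (st j) (sdrop j (to_stream (\<lambda>k. \<tau> (Suc k) - \<tau> k))) = ennreal (\<phi> t Y)"
proof (induction n arbitrary: j)
  case 0
  then show ?case using flow[of j] by simp
next
  case (Suc n)
  show ?case
  proof (cases "t < \<tau> (Suc j)")
    case True
    then show ?thesis using flow[of j] Suc.prems by simp
  next
    case False
    have "V \<phi> Fl J t n (\<tau> (Suc j)) (st (Suc j)) (sdrop (Suc j) (to_stream (\<lambda>k. \<tau> (Suc k) - \<tau> k))) = ennreal (\<phi> t Y)"
      using Suc.IH[of "Suc j"] Suc.prems False by simp
    then show ?thesis using False step[of j] by simp
  qed
qed

lemma V_mono: "V \<phi> Fl J t n s st \<omega> \<le> V \<phi> Fl J t (Suc n) s st \<omega>"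
proof (induction n arbitrary: s st \<omega>)
  case 0 then show ?case by simp
next
  case (Suc n) then show ?case by simp
qed

lemma const_on_interval:
  fixes g :: "real \<Rightarrow> 'a::banach"
  assumes ab: "a \<le> b" and gc: "continuous_on {a..b} g"
    and gd: "\<And>v. a < v \<Longrightarrow> v < b \<Longrightarrow> (g has_vector_derivative 0) (at v)"
  shows "g b = g a"
proof (rule has_derivative_zero_unique_strong_interval[of "{a, b}" a b g "g a" b])
  fix v assume v: "v \<in> {a..b} - {a, b}"
  then have "(g has_vector_derivative 0) (at v within {a..b})"
    using gd[of v] by (auto intro: has_vector_derivative_at_within)
  then show "(g has_derivative (\<lambda>h. 0)) (at v within {a..b})"
    by (simp add: has_vector_derivative_def)
qed (use ab gc in auto)


lemma left_limit_eq:
  fixes x g :: "real \<Rightarrow> 'a::t2_space"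
  assumes lim: "(x \<longlongrightarrow> xl) (at_left b)" and ab: "a < b"
    and eq: "\<And>u. a < u \<Longrightarrow> u < b \<Longrightarrow> x u = g u"
    and gc: "(g \<longlongrightarrow> g b) (at b)"
  shows "xl = g b"
proof -
  have ev: "eventually (\<lambda>u. g u = x u) (at_left b)"
    using eventually_at_left_real[OF ab] by eventually_elim (use eq in auto)
  have "(g \<longlongrightarrow> g b) (at_left b)" by (rule tendsto_mono[OF at_le[OF subset_UNIV] gc])
  then have "(x \<longlongrightarrow> g b) (at_left b)" by (rule tendsto_cong[THEN iffD1, rotated]) (rule ev)
  from tendsto_unique[OF trivial_limit_at_left_real lim this] show ?thesis .
qed

lemma valid_props:
  assumes "valid_jump_times \<tau>"
  shows "\<tau> 0 = 0" "\<And>k. 0 \<le> \<tau> k" "\<And>k. \<tau> k < \<tau> (Suc k)"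
proof -
  show t0: "\<tau> 0 = 0" using assms by (simp add: valid_jump_times_def)
  have sm: "strict_mono \<tau>" using assms by (simp add: valid_jump_times_def)
  show "\<And>k. \<tau> k < \<tau> (Suc k)" using sm by (simp add: strict_mono_Suc_iff)
  fix k show "0 \<le> \<tau> k" using strict_mono_less_eq[OF sm, of 0 k] t0 by simp
qed

lemma path1:
  fixes df :: "'a::euclidean_space \<Rightarrow> 'a"
  assumes valid: "valid_jump_times \<tau>"
    and P: "continuized_path (\<lambda>t. 2 / t) (\<lambda>t. 0) (\<lambda>t. 1 / L) (\<lambda>t. t / (2 * L)) df x0 z0 \<tau> x z"
  shows path1_flow: "\<And>k u. \<tau> k \<le> u \<Longrightarrow> u < \<tau> (Suc k) \<Longrightarrow> 0 < u \<Longrightarrow> (x u, z u) = Fl1 (\<tau> k) u (x (\<tau> k), z (\<tau> k))"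
    and path1_step: "\<And>k. (x (\<tau> (Suc k)), z (\<tau> (Suc k))) = J1 df L (\<tau> (Suc k)) (Fl1 (\<tau> k) (\<tau> (Suc k)) (x (\<tau> k), z (\<tau> k)))"
    and path1_init: "(x 0, z 0) = (x0, z0)"
proof -
  note vp = valid_props[OF valid]
  show "(x 0, z 0) = (x0, z0)" using P by (simp add: continuized_path_def)
  have cx: "continuous_on {\<tau> k..<\<tau> (Suc k)} x" and cz: "continuous_on {\<tau> k..<\<tau> (Suc k)} z" for k
    using P by (auto simp: continuized_path_def)
  have dx: "(x has_vector_derivative ((2 / t) *\<^sub>R (z t - x t))) (at t)"
    and dz: "(z has_vector_derivative 0) (at t)" if "t \<in> {\<tau> k<..<\<tau> (Suc k)}" for t k
    using P that by (auto simp: continuized_path_def)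
  show flow: "(x u, z u) = Fl1 (\<tau> k) u (x (\<tau> k), z (\<tau> k))" if u: "\<tau> k \<le> u" "u < \<tau> (Suc k)" "0 < u" for k u
  proof (cases "u = \<tau> k")
    case True
    then show ?thesis using u by (simp add: Fl1_def)
  next
    case False
    with u have ku: "\<tau> k < u" by simp
    have zc: "z v = z (\<tau> k)" if v: "\<tau> k \<le> v" "v \<le> u" for v
    proof (rule const_on_interval[OF v(1)])
      show "continuous_on {\<tau> k..v} z" by (rule continuous_on_subset[OF cz]) (use v u in auto)
      fix w assume "\<tau> k < w" "w < v"
      then show "(z has_vector_derivative 0) (at w)" using v u by (intro dz[of w k]) auto
    qed
    define zk where "zk = z (\<tau> k)"
    define g where "g v = v\<^sup>2 *\<^sub>R (x v - zk)" for v
    have "g u = g (\<tau> k)"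
    proof (rule const_on_interval[OF u(1)])
      show "continuous_on {\<tau> k..u} g" unfolding g_def
        by (intro continuous_intros continuous_on_subset[OF cx]) (use u in auto)
      fix w assume w: "\<tau> k < w" "w < u"
      have w0: "w > 0" using w vp(2)[of k] by linarith
      have "(g has_vector_derivative (w\<^sup>2 *\<^sub>R ((2 / w) *\<^sub>R (z w - x w) - 0) + (2 * w) *\<^sub>R (x w - zk))) (at w)"
        unfolding g_def
        by (intro has_vector_derivative_scaleR has_vector_derivative_diff dx[of w k] has_vector_derivative_const)
           (use w u in \<open>auto intro!: derivative_eq_intros\<close>)
      moreover have "w\<^sup>2 *\<^sub>R ((2 / w) *\<^sub>R (z w - x w) - 0) + (2 * w) *\<^sub>R (x w - zk) = 0"
        using zc[of w] w w0 by (simp add: zk_def power2_eq_square algebra_simps)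
      ultimately show "(g has_vector_derivative 0) (at w)" by simp
    qed
    then have eq: "u\<^sup>2 *\<^sub>R (x u - zk) = (\<tau> k)\<^sup>2 *\<^sub>R (x (\<tau> k) - zk)" by (simp add: g_def)
    have "x u - zk = inverse (u\<^sup>2) *\<^sub>R (u\<^sup>2 *\<^sub>R (x u - zk))" using u by simp
    also have "\<dots> = inverse (u\<^sup>2) *\<^sub>R ((\<tau> k)\<^sup>2 *\<^sub>R (x (\<tau> k) - zk))" using eq by simp
    also have "\<dots> = (\<tau> k / u)\<^sup>2 *\<^sub>R (x (\<tau> k) - zk)" by (simp add: power_divide field_simps)
    finally have "x u = zk + (\<tau> k / u)\<^sup>2 *\<^sub>R (x (\<tau> k) - zk)"
      by (simp add: power_divide algebra_simps)
    then show ?thesis using zc[of u] u by (simp add: Fl1_def zk_def)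
  qed
  fix k
  obtain xl zl where lx: "(x \<longlongrightarrow> xl) (at_left (\<tau> (Suc k)))" and lz: "(z \<longlongrightarrow> zl) (at_left (\<tau> (Suc k)))"
    and ex: "x (\<tau> (Suc k)) = xl - (1 / L) *\<^sub>R df xl"
    and ez: "z (\<tau> (Suc k)) = zl - (\<tau> (Suc k) / (2 * L)) *\<^sub>R df xl"
  proof -
    have "\<forall>k\<ge>1. \<exists>xl zl. (x \<longlongrightarrow> xl) (at_left (\<tau> k)) \<and> (z \<longlongrightarrow> zl) (at_left (\<tau> k)) \<and>
          x (\<tau> k) = xl - (1 / L) *\<^sub>R df xl \<and> z (\<tau> k) = zl - (\<tau> k / (2 * L)) *\<^sub>R df xl"
      using P unfolding continuized_path_def by blast
    from this[rule_format, of "Suc k"] show thesis using that by auto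
  qed
  define F where "F u = Fl1 (\<tau> k) u (x (\<tau> k), z (\<tau> k))" for u
  have b0: "\<tau> (Suc k) > 0" using vp(2)[of k] vp(3)[of k] by linarith
  have eqF: "(x u, z u) = F u" if "\<tau> k < u" "u < \<tau> (Suc k)" for u
    using flow[of k u] that vp(2)[of k] by (auto simp: F_def)
  have eqx: "x u = fst (F u)" and eqz: "z u = snd (F u)" if "\<tau> k < u" "u < \<tau> (Suc k)" for u
    using eqF[OF that] by (metis fst_conv, metis snd_conv)
  have Fc: "isCont F (\<tau> (Suc k))" unfolding F_def Fl1_def using b0 by (auto intro!: continuous_intros)
  have "xl = fst (F (\<tau> (Suc k)))"
    by (rule left_limit_eq[OF lx vp(3)[of k] eqx]) (use Fc in \<open>auto intro!: tendsto_intros simp: isCont_def\<close>)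
  moreover have "zl = snd (F (\<tau> (Suc k)))"
    by (rule left_limit_eq[OF lz vp(3)[of k] eqz]) (use Fc in \<open>auto intro!: tendsto_intros simp: isCont_def\<close>)
  ultimately show "(x (\<tau> (Suc k)), z (\<tau> (Suc k))) = J1 df L (\<tau> (Suc k)) (Fl1 (\<tau> k) (\<tau> (Suc k)) (x (\<tau> k), z (\<tau> k)))"
    using ex ez by (simp add: J1_def F_def)
qed


lemma path2:
  fixes df :: "'a::euclidean_space \<Rightarrow> 'a"
  assumes valid: "valid_jump_times \<tau>"
    and P: "continuized_path (\<lambda>t. a) (\<lambda>t. a) (\<lambda>t. 1 / L) (\<lambda>t. c) df x0 z0 \<tau> x z"
  shows path2_flow: "\<And>k u. \<tau> k \<le> u \<Longrightarrow> u < \<tau> (Suc k) \<Longrightarrow> (x u, z u) = Fl2 a (\<tau> k) u (x (\<tau> k), z (\<tau> k))"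
    and path2_step: "\<And>k. (x (\<tau> (Suc k)), z (\<tau> (Suc k))) = J2 df L c (\<tau> (Suc k)) (Fl2 a (\<tau> k) (\<tau> (Suc k)) (x (\<tau> k), z (\<tau> k)))"
    and path2_init: "(x 0, z 0) = (x0, z0)"
proof -
  note vp = valid_props[OF valid]
  show "(x 0, z 0) = (x0, z0)" using P by (simp add: continuized_path_def)
  have cx: "continuous_on {\<tau> k..<\<tau> (Suc k)} x" and cz: "continuous_on {\<tau> k..<\<tau> (Suc k)} z" for k
    using P by (auto simp: continuized_path_def)
  have dx: "(x has_vector_derivative (a *\<^sub>R (z t - x t))) (at t)"
    and dz: "(z has_vector_derivative (a *\<^sub>R (x t - z t))) (at t)" if "t \<in> {\<tau> k<..<\<tau> (Suc k)}" for t k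
    using P that by (auto simp: continuized_path_def)
  show flow: "(x u, z u) = Fl2 a (\<tau> k) u (x (\<tau> k), z (\<tau> k))" if u: "\<tau> k \<le> u" "u < \<tau> (Suc k)" for k u
  proof (cases "u = \<tau> k")
    case True
    then show ?thesis by (simp add: Fl2_def half_sum_diff)
  next
    case False
    with u have ku: "\<tau> k < u" by simp
    define g1 where "g1 v = x v + z v" for v
    define g2 where "g2 v = exp (2 * a * v) *\<^sub>R (x v - z v)" for v
    have "g1 u = g1 (\<tau> k)"
    proof (rule const_on_interval[OF u(1)])
      show "continuous_on {\<tau> k..u} g1" unfolding g1_def
        by (intro continuous_intros continuous_on_subset[OF cx] continuous_on_subset[OF cz]) (use u in auto)
      fix w assume w: "\<tau> k < w" "w < u"
      have "(g1 has_vector_derivative (a *\<^sub>R (z w - x w) + a *\<^sub>R (x w - z w))) (at w)"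
        unfolding g1_def by (intro has_vector_derivative_add dx[of w k] dz[of w k]) (use w u in auto)
      then show "(g1 has_vector_derivative 0) (at w)" by (simp add: algebra_simps)
    qed
    then have sum: "x u + z u = x (\<tau> k) + z (\<tau> k)" by (simp add: g1_def)
    have "g2 u = g2 (\<tau> k)"
    proof (rule const_on_interval[OF u(1)])
      show "continuous_on {\<tau> k..u} g2" unfolding g2_def
        by (intro continuous_intros continuous_on_subset[OF cx] continuous_on_subset[OF cz]) (use u in auto)
      fix w assume w: "\<tau> k < w" "w < u"
      have "(g2 has_vector_derivative (exp (2 * a * w) *\<^sub>R (a *\<^sub>R (z w - x w) - a *\<^sub>R (x w - z w))
             + (exp (2 * a * w) * (2 * a)) *\<^sub>R (x w - z w))) (at w)"
        unfolding g2_def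
        by (intro has_vector_derivative_scaleR has_vector_derivative_diff dx[of w k] dz[of w k])
           (use w u in \<open>auto intro!: derivative_eq_intros\<close>)
      moreover have "exp (2 * a * w) *\<^sub>R (a *\<^sub>R (z w - x w) - a *\<^sub>R (x w - z w))
             + (exp (2 * a * w) * (2 * a)) *\<^sub>R (x w - z w) = 0"
      proof -
        have "a *\<^sub>R (z w - x w) - a *\<^sub>R (x w - z w) = (-2 * a) *\<^sub>R (x w - z w)"
          by (simp add: algebra_simps scaleR_2 flip: scaleR_add_left)
        then show ?thesis by (simp add: scaleR_add_left[symmetric])
      qed
      ultimately show "(g2 has_vector_derivative 0) (at w)" by simp
    qed
    then have "exp (2 * a * u) *\<^sub>R (x u - z u) = exp (2 * a * \<tau> k) *\<^sub>R (x (\<tau> k) - z (\<tau> k))"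
      by (simp add: g2_def)
    then have "x u - z u = (exp (- (2 * a * u)) * exp (2 * a * \<tau> k)) *\<^sub>R (x (\<tau> k) - z (\<tau> k))"
      by (metis (no_types, lifting) exp_minus_inverse mult.commute scaleR_one scaleR_scaleR)
    also have "exp (- (2 * a * u)) * exp (2 * a * \<tau> k) = exp (-2 * a * (u - \<tau> k))"
      by (simp add: exp_add[symmetric] algebra_simps)
    finally have diff: "x u - z u = exp (-2 * a * (u - \<tau> k)) *\<^sub>R (x (\<tau> k) - z (\<tau> k))" .
    have "x u = (1/2) *\<^sub>R (x u + z u) + (1/2) *\<^sub>R (x u - z u)" by (simp add: half_sum_diff)
    moreover have "z u = (1/2) *\<^sub>R (x u + z u) - (1/2) *\<^sub>R (x u - z u)" by (simp add: half_sum_diff)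
    ultimately show ?thesis unfolding sum diff by (simp add: Fl2_def)
  qed
  fix k
  obtain xl zl where lx: "(x \<longlongrightarrow> xl) (at_left (\<tau> (Suc k)))" and lz: "(z \<longlongrightarrow> zl) (at_left (\<tau> (Suc k)))"
    and ex: "x (\<tau> (Suc k)) = xl - (1 / L) *\<^sub>R df xl"
    and ez: "z (\<tau> (Suc k)) = zl - c *\<^sub>R df xl"
  proof -
    have "\<forall>k\<ge>1. \<exists>xl zl. (x \<longlongrightarrow> xl) (at_left (\<tau> k)) \<and> (z \<longlongrightarrow> zl) (at_left (\<tau> k)) \<and>
          x (\<tau> k) = xl - (1 / L) *\<^sub>R df xl \<and> z (\<tau> k) = zl - c *\<^sub>R df xl"
      using P unfolding continuized_path_def by blast
    from this[rule_format, of "Suc k"] show thesis using that by auto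
  qed
  define F where "F u = Fl2 a (\<tau> k) u (x (\<tau> k), z (\<tau> k))" for u
  have eqF: "(x u, z u) = F u" if "\<tau> k < u" "u < \<tau> (Suc k)" for u
    using flow[of k u] that by (auto simp: F_def)
  have eqx: "x u = fst (F u)" and eqz: "z u = snd (F u)" if "\<tau> k < u" "u < \<tau> (Suc k)" for u
    using eqF[OF that] by (metis fst_conv, metis snd_conv)
  have Fc: "isCont F (\<tau> (Suc k))" unfolding F_def Fl2_def by (auto intro!: continuous_intros)
  have "xl = fst (F (\<tau> (Suc k)))"
    by (rule left_limit_eq[OF lx vp(3)[of k] eqx]) (use Fc in \<open>auto intro!: tendsto_intros simp: isCont_def\<close>)
  moreover have "zl = snd (F (\<tau> (Suc k)))"
    by (rule left_limit_eq[OF lz vp(3)[of k] eqz]) (use Fc in \<open>auto intro!: tendsto_intros simp: isCont_def\<close>)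
  ultimately show "(x (\<tau> (Suc k)), z (\<tau> (Suc k))) = J2 df L c (\<tau> (Suc k)) (Fl2 a (\<tau> k) (\<tau> (Suc k)) (x (\<tau> k), z (\<tau> k)))"
    using ex ez by (simp add: J2_def F_def)
qed


context
  fixes f :: "'a::euclidean_space \<Rightarrow> real" and df :: "'a \<Rightarrow> 'a"
  assumes fm[measurable]: "f \<in> borel_measurable borel" and dfm[measurable]: "df \<in> borel_measurable borel"
begin

lemma meas1A: "(\<lambda>p. phi1 f L xs t (Fl1 (fst p) t (snd p))) \<in> borel_measurable (borel \<Otimes>\<^sub>M (borel :: ('a \<times> 'a) measure))"
  unfolding phi1_def Fl1_def borel_prod[symmetric] apply simp apply measurable done

lemma meas1B: "(\<lambda>q. (fst (fst q) + snd q, J1 df L (fst (fst q) + snd q) (Fl1 (fst (fst q)) (fst (fst q) + snd q) (snd (fst q)))))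
      \<in> measurable ((borel \<Otimes>\<^sub>M (borel :: ('a \<times> 'a) measure)) \<Otimes>\<^sub>M borel) (borel \<Otimes>\<^sub>M borel)"
  unfolding J1_def Fl1_def borel_prod[symmetric] apply simp apply measurable done

lemma meas1C: "(\<lambda>e. phi1 f L xs (s + e) (J1 df L (s + e) (Fl1 s (s + e) p))) \<in> borel_measurable borel"
  unfolding phi1_def Fl1_def J1_def apply simp apply measurable done

lemma meas2A: "(\<lambda>p. phi2 f \<mu> a xs t (Fl2 a (fst p) t (snd p))) \<in> borel_measurable (borel \<Otimes>\<^sub>M (borel :: ('a \<times> 'a) measure))"
  unfolding phi2_def Fl2_def borel_prod[symmetric] apply simp apply measurable done

lemma meas2B: "(\<lambda>q. (fst (fst q) + snd q, J2 df L c (fst (fst q) + snd q) (Fl2 a (fst (fst q)) (fst (fst q) + snd q) (snd (fst q)))))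
      \<in> measurable ((borel \<Otimes>\<^sub>M (borel :: ('a \<times> 'a) measure)) \<Otimes>\<^sub>M borel) (borel \<Otimes>\<^sub>M borel)"
  unfolding J2_def Fl2_def borel_prod[symmetric] apply simp apply measurable done

lemma meas2C: "(\<lambda>e. phi2 f \<mu> a xs (s + e) (J2 df L c (s + e) (Fl2 a s (s + e) p))) \<in> borel_measurable borel"
  unfolding phi2_def Fl2_def J2_def apply simp apply measurable done

end


lemma Expo_exp_integral: "(\<integral>\<^sup>+e. ennreal (exp (- e)) \<partial>Expo) = ennreal (1/2)"
proof -
  have "(\<integral>\<^sup>+e. ennreal (exp (- e)) \<partial>Expo) = (\<integral>\<^sup>+e. ennreal (exponential_density 1 e) * ennreal (exp (- e)) \<partial>lborel)"
    by (subst nn_integral_density) auto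
  also have "\<dots> = (\<integral>\<^sup>+e. ennreal (exp (- 2 * e)) * indicator {0..} e \<partial>lborel)"
    by (intro nn_integral_cong)
       (auto simp: exponential_density_def indicator_def ennreal_mult[symmetric] exp_add[symmetric])
  also have "\<dots> = ennreal (1/2)"
  proof (rule nn_integral_has_integral_lebesgue')
    show "((\<lambda>e::real. exp (- 2 * e)) has_integral (1/2::real)) {0..}"
      using has_integral_exp_minus_to_infinity[of 2 0] by simp
  qed auto
  finally show ?thesis .
qed

lemma exp_sum_integral:
  "(\<integral>\<^sup>+\<omega>. ennreal (exp (- (\<Sum>k<n. \<omega> !! k))) \<partial>stream_space Expo) = ennreal ((1/2)^n)"
proof (induction n)
  interpret E: prob_space Expo by (rule prob_Expo)
  interpret S: prob_space "stream_space Expo" by (rule E.prob_space_stream_space)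
  {
    case 0
    show ?case by (simp add: S.emeasure_space_1)
  next
    case (Suc n)
    have m: "(\<lambda>\<omega>. ennreal (exp (- (\<Sum>k<Suc n. \<omega> !! k)))) \<in> borel_measurable (stream_space Expo)"
      by measurable
    have "(\<integral>\<^sup>+\<omega>. ennreal (exp (- (\<Sum>k<Suc n. \<omega> !! k))) \<partial>stream_space Expo)
        = (\<integral>\<^sup>+e. (\<integral>\<^sup>+\<omega>. ennreal (exp (- (\<Sum>k<Suc n. (e ## \<omega>) !! k))) \<partial>stream_space Expo) \<partial>Expo)"
      by (rule E.nn_integral_stream_space[OF m])
    also have "\<dots> = (\<integral>\<^sup>+e. ennreal (exp (- e)) * ennreal ((1/2)^n) \<partial>Expo)"
    proof (intro nn_integral_cong)
      fix e :: real
      have "(\<lambda>\<omega>. ennreal (exp (- (\<Sum>k<Suc n. (e ## \<omega>) !! k)))) = (\<lambda>\<omega>. ennreal (exp (- e)) * ennreal (exp (- (\<Sum>k<n. \<omega> !! k))))"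
        apply (rule ext)
        apply (simp only: sum.lessThan_Suc_shift)
        apply (simp add: ennreal_mult[symmetric] exp_add[symmetric])
        done
      then show "(\<integral>\<^sup>+\<omega>. ennreal (exp (- (\<Sum>k<Suc n. (e ## \<omega>) !! k))) \<partial>stream_space Expo) = ennreal (exp (- e)) * ennreal ((1/2)^n)"
        using Suc.IH by (simp add: nn_integral_cmult)
    qed
    also have "\<dots> = ennreal ((1/2)^n) * (\<integral>\<^sup>+e. ennreal (exp (- e)) \<partial>Expo)"
      by (subst nn_integral_multc) (auto simp: mult.commute)
    also have "\<dots> = ennreal ((1/2)^n) * ennreal (1/2)" by (simp only: Expo_exp_integral)
    also have "\<dots> = ennreal ((1/2)^n * (1/2))" by (rule ennreal_mult[symmetric]) auto
    also have "\<dots> = ennreal ((1/2)^Suc n)" by (simp add: mult.commute)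
    finally show ?case .
  }
qed

lemma AE_diverge: "AE \<omega> in stream_space Expo. \<forall>m::nat. \<exists>n. real m < (\<Sum>k<n. \<omega> !! k)"
proof (rule AE_all_countable[THEN iffD2], rule allI)
  interpret E: prob_space Expo by (rule prob_Expo)
  interpret S: prob_space "stream_space Expo" by (rule E.prob_space_stream_space)
  fix m :: nat
  define N where "N = {\<omega> \<in> space (stream_space Expo). \<forall>n. (\<Sum>k<n. \<omega> !! k) \<le> real m}"
  have Nm: "N \<in> sets (stream_space Expo)" unfolding N_def by measurable
  have bnd: "emeasure (stream_space Expo) N \<le> ennreal (exp (real m) * (1/2)^n)" for n
  proof -
    have "emeasure (stream_space Expo) N = (\<integral>\<^sup>+\<omega>. indicator N \<omega> \<partial>stream_space Expo)"
      using Nm by simp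
    also have "\<dots> \<le> (\<integral>\<^sup>+\<omega>. ennreal (exp (real m)) * ennreal (exp (- (\<Sum>k<n. \<omega> !! k))) \<partial>stream_space Expo)"
    proof (intro nn_integral_mono)
      fix \<omega> assume "\<omega> \<in> space (stream_space Expo)"
      show "indicator N \<omega> \<le> ennreal (exp (real m)) * ennreal (exp (- (\<Sum>k<n. \<omega> !! k)))"
      proof (cases "\<omega> \<in> N")
        case True
        then have "(\<Sum>k<n. \<omega> !! k) \<le> real m" by (auto simp: N_def)
        then have "1 \<le> exp (real m) * exp (- (\<Sum>k<n. \<omega> !! k))"
          by (simp add: exp_add[symmetric])
        then show ?thesis using True by (simp add: ennreal_mult[symmetric])
      qed simp
    qed
    also have "\<dots> = ennreal (exp (real m)) * ennreal ((1/2)^n)"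
      by (subst nn_integral_cmult) (auto simp: exp_sum_integral)
    also have "\<dots> = ennreal (exp (real m) * (1/2)^n)" by (simp add: ennreal_mult)
    finally show ?thesis .
  qed
  have lim: "(\<lambda>n. ennreal (exp (real m) * (1/2)^n)) \<longlonglongrightarrow> ennreal 0"
    by (intro tendsto_ennrealI tendsto_mult_right_zero LIMSEQ_power_zero) simp
  have "emeasure (stream_space Expo) N \<le> ennreal 0"
    by (rule tendsto_le[OF sequentially_bot lim tendsto_const]) (use bnd in auto)
  then have "N \<in> null_sets (stream_space Expo)" using Nm by (simp add: null_sets_def)
  then show "AE \<omega> in stream_space Expo. \<exists>n. real m < (\<Sum>k<n. \<omega> !! k)"
    by (rule AE_I') (auto simp: N_def not_less)
qed

lemma AE_valid:
  assumes P: "prob_space M" and PJ: "poisson_jump_times M T"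
  shows "AE w in M. valid_jump_times (\<lambda>k. T k w)"
proof -
  interpret E: prob_space Expo by (rule prob_Expo)
  define om where "om w = to_stream (\<lambda>k. T (Suc k) w - T k w)" for w
  define Good where "Good \<omega> \<longleftrightarrow> (\<forall>k. 0 < \<omega> !! k) \<and> (\<forall>m::nat. \<exists>n. real m < (\<Sum>k<n. \<omega> !! k))" for \<omega> :: "real stream"
  have "AE \<omega> in stream_space Expo. stream_all (\<lambda>e. 0 < e) \<omega>"
    by (rule E.AE_stream_all[OF _ AE_Expo_pos]) measurable
  then have G: "AE \<omega> in stream_space Expo. Good \<omega>"
    using AE_diverge by eventually_elim (auto simp: Good_def sset_range)
  have Gm: "{\<omega> \<in> space (stream_space Expo). Good \<omega>} \<in> sets (stream_space Expo)"
    unfolding Good_def by measurable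
  have "AE \<omega> in distr M (stream_space Expo) om. Good \<omega>"
    unfolding om_def[abs_def] by (subst law_incr(1)[OF P PJ]) (rule G)
  then have AG: "AE w in M. Good (om w)"
    by (subst (asm) AE_distr_iff[OF law_incr(2)[OF P PJ, folded om_def] Gm])
  have T0: "\<forall>w\<in>space M. T 0 w = 0" using PJ by (simp add: poisson_jump_times_def)
  show ?thesis
    using AG AE_space
  proof eventually_elim
    case (elim w)
    then have g: "Good (om w)" and w0: "T 0 w = 0" using T0 by auto
    have inc: "T k w < T (Suc k) w" for k
      using g by (simp add: Good_def om_def)
    have sm: "strict_mono (\<lambda>k. T k w)" by (rule strict_monoI_Suc) (rule inc)
    have sumT: "(\<Sum>k<n. om w !! k) = T n w" for n
      using sum_lessThan_telescope[of "\<lambda>k. T k w" n] by (simp add: om_def w0)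
    have "filterlim (\<lambda>k. T k w) at_top sequentially"
      unfolding filterlim_at_top
    proof
      fix Z :: real
      obtain m :: nat where m: "Z < real m" using reals_Archimedean2 by blast
      have "\<exists>n. real m < T n w" using g sumT by (auto simp: Good_def)
      then obtain n where n: "real m < T n w" by blast
      show "eventually (\<lambda>k. Z \<le> T k w) sequentially"
        unfolding eventually_sequentially
      proof (intro exI allI impI)
        fix k assume "n \<le> k"
        then have "T n w \<le> T k w" using strict_mono_less_eq[OF sm] by simp
        then show "Z \<le> T k w" using m n by linarith
      qed
    qed
    then show ?case using sm w0 by (simp add: valid_jump_times_def)
  qed
qed


lemma assemble:
  fixes \<phi> :: "real \<Rightarrow> 'b::euclidean_space \<Rightarrow> real" and st :: "'w \<Rightarrow> nat \<Rightarrow> 'b" and Y :: "'w \<Rightarrow> 'b"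
    and g :: "'w \<Rightarrow> ennreal"
  assumes P: "prob_space M" and PJ: "poisson_jump_times M T" and t: "0 \<le> t"
  and paths: "AE w in M. valid_jump_times (\<lambda>k. T k w) \<longrightarrow>
      ((\<forall>k. st w (Suc k) = J (T (Suc k) w) (Fl (T k w) (T (Suc k) w) (st w k))) \<and>
       (\<forall>k. T k w \<le> t \<longrightarrow> t < T (Suc k) w \<longrightarrow> Y w = Fl (T k w) t (st w k)) \<and>
       st w 0 = pinit \<and> g w \<le> ennreal C * ennreal (\<phi> t (Y w)))"
  and mA: "(\<lambda>p. \<phi> t (Fl (fst p) t (snd p))) \<in> borel_measurable (borel \<Otimes>\<^sub>M (borel :: 'b measure))"
  and mB: "(\<lambda>q. (fst (fst q) + snd q, J (fst (fst q) + snd q) (Fl (fst (fst q)) (fst (fst q) + snd q) (snd (fst q)))))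
      \<in> measurable ((borel \<Otimes>\<^sub>M (borel :: 'b measure)) \<Otimes>\<^sub>M borel) (borel \<Otimes>\<^sub>M borel)"
  and nonneg: "\<And>u st. \<phi> u st \<ge> 0"
  and H: "\<And>s st. 0 \<le> s \<Longrightarrow> s \<le> t \<Longrightarrow> (\<integral>\<^sup>+e. (if t < s + e then ennreal (\<phi> t (Fl s t st))
            else ennreal (\<phi> (s+e) (J (s+e) (Fl s (s+e) st)))) \<partial>Expo) \<le> ennreal (\<phi> s st)"
  shows "(\<integral>\<^sup>+w. g w \<partial>M) \<le> ennreal C * ennreal (\<phi> 0 pinit)"
proof -
  interpret prob_space M by fact
  interpret E: prob_space Expo by (rule prob_Expo)
  interpret S: prob_space "stream_space Expo" by (rule E.prob_space_stream_space)
  define om where "om w = to_stream (\<lambda>k. T (Suc k) w - T k w)" for w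
  define W where "W \<omega> = (SUP n. V \<phi> Fl J t n 0 pinit \<omega>)" for \<omega>
  have mV: "(\<lambda>\<omega>. V \<phi> Fl J t n 0 pinit \<omega>) \<in> borel_measurable (stream_space Expo)" for n
    by (rule V_meas_S[where \<phi>=\<phi> and Fl=Fl and J=J and t=t, OF mA mB])
  have mW: "W \<in> borel_measurable (stream_space Expo)"
    unfolding W_def by (rule borel_measurable_SUP) (use mV in auto)
  have mom: "om \<in> measurable M (stream_space Expo)"
    unfolding om_def[abs_def] by (rule law_incr(2)[OF P PJ])
  have law: "distr M (stream_space Expo) om = stream_space Expo"
    unfolding om_def[abs_def] by (rule law_incr(1)[OF P PJ])
  have AE1: "AE w in M. g w \<le> ennreal C * W (om w)"
    using paths AE_valid[OF P PJ]
  proof eventually_elim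
    case (elim w)
    then have v: "valid_jump_times (\<lambda>k. T k w)" by blast
    with elim have step: "\<And>k. st w (Suc k) = J (T (Suc k) w) (Fl (T k w) (T (Suc k) w) (st w k))"
      and flow: "\<And>k. T k w \<le> t \<Longrightarrow> t < T (Suc k) w \<Longrightarrow> Y w = Fl (T k w) t (st w k)"
      and s0: "st w 0 = pinit" and gb: "g w \<le> ennreal C * ennreal (\<phi> t (Y w))" by blast+
    have T0: "T 0 w = 0" using v by (simp add: valid_jump_times_def)
    have "eventually (\<lambda>k. t < T k w) sequentially"
      using v unfolding valid_jump_times_def filterlim_at_top_dense by blast
    then obtain N where N: "\<And>k. N \<le> k \<Longrightarrow> t < T k w" unfolding eventually_sequentially by blast
    have "V \<phi> Fl J t N (T 0 w) (st w 0) (sdrop 0 (to_stream (\<lambda>k. T (Suc k) w - T k w))) = ennreal (\<phi> t (Y w))"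
      by (rule V_eq[where \<tau>="\<lambda>k. T k w" and st="st w", OF step flow]) (use T0 t N in auto)
    then have "V \<phi> Fl J t N 0 pinit (om w) = ennreal (\<phi> t (Y w))" by (simp add: T0 s0 om_def)
    then have "ennreal (\<phi> t (Y w)) \<le> W (om w)" unfolding W_def by (metis SUP_upper UNIV_I)
    then show ?case using gb by (meson dual_order.trans mult_left_mono zero_le)
  qed
  have "(\<integral>\<^sup>+w. g w \<partial>M) \<le> (\<integral>\<^sup>+w. ennreal C * W (om w) \<partial>M)"
    by (rule nn_integral_mono_AE[OF AE1])
  also have "\<dots> = ennreal C * (\<integral>\<^sup>+w. W (om w) \<partial>M)"
    by (rule nn_integral_cmult) (use measurable_compose[OF mom mW] in simp)
  also have "(\<integral>\<^sup>+w. W (om w) \<partial>M) = (\<integral>\<^sup>+\<omega>. W \<omega> \<partial>distr M (stream_space Expo) om)"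
    by (rule nn_integral_distr[symmetric, OF mom]) (simp add: law mW)
  also have "\<dots> = (\<integral>\<^sup>+\<omega>. W \<omega> \<partial>stream_space Expo)" by (simp add: law)
  also have "\<dots> = (SUP n. (\<integral>\<^sup>+\<omega>. V \<phi> Fl J t n 0 pinit \<omega> \<partial>stream_space Expo))"
    unfolding W_def
    by (rule nn_integral_monotone_convergence_SUP) (auto intro!: incseq_SucI le_funI V_mono mV)
  also have "\<dots> \<le> ennreal (\<phi> 0 pinit)"
    by (rule SUP_least) (rule V_bound[where \<phi>=\<phi> and Fl=Fl and J=J and t=t, OF mA mB nonneg H], use t in auto)
  finally show ?thesis by (simp add: mult_left_mono)
qed


lemma phi1_nonneg:
  assumes "L > 0" "\<And>x. f xs \<le> f x"
  shows "phi1 f L xs u p \<ge> 0"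
  using assms by (simp add: phi1_def)

lemma phi2_nonneg:
  assumes "\<mu> > 0" "\<And>x. f xs \<le> f x"
  shows "phi2 f \<mu> a xs u p \<ge> 0"
  using assms by (simp add: phi2_def)

lemma H1:
  fixes f :: "'a::euclidean_space \<Rightarrow> real"
  assumes cvx: "convex_on UNIV f" and der: "\<And>x. (f has_derivative (\<lambda>h. df x \<bullet> h)) (at x)"
    and L: "L > 0" and sm: "L_smooth L f df" and min: "\<And>x. f xs \<le> f x" and s: "0 \<le> s" "s \<le> t"
  shows "(\<integral>\<^sup>+e. (if t < s + e then ennreal (phi1 f L xs t (Fl1 s t st))
            else ennreal (phi1 f L xs (s+e) (J1 df L (s+e) (Fl1 s (s+e) st)))) \<partial>Expo) \<le> ennreal (phi1 f L xs s st)"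
proof -
  have fm: "f \<in> borel_measurable borel" by (rule borel_measurable_continuous_onI[OF f_cont[OF der]])
  have dfm: "df \<in> borel_measurable borel" by (rule borel_measurable_continuous_onI[OF df_continuous[OF cvx der L sm]])
  note ly = lyap1[OF cvx der L sm s, of xs st]
  have eqf: "(\<lambda>e. if t < s + e then ennreal (phi1 f L xs t (Fl1 s t st))
            else ennreal (phi1 f L xs (s+e) (J1 df L (s+e) (Fl1 s (s+e) st))))
      = (\<lambda>e. if t - s < e then ennreal (phi1 f L xs t (Fl1 s t st))
            else ennreal (phi1 f L xs (s+e) (J1 df L (s+e) (Fl1 s (s+e) st))))"
    by (rule ext) simp
  have "(\<integral>\<^sup>+e. (if t - s < e then ennreal (phi1 f L xs t (Fl1 s t st))
            else ennreal (phi1 f L xs (s+e) (J1 df L (s+e) (Fl1 s (s+e) st)))) \<partial>Expo)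
      = ennreal (phi1 f L xs t (Fl1 s t st) * exp (-(t-s))
      + integral {0..t-s} (\<lambda>e. exp (- e) * phi1 f L xs (s+e) (J1 df L (s+e) (Fl1 s (s+e) st))))"
    using s by (intro Expo_split[OF phi1_nonneg[where f=f and xs=xs, OF L min] _ phi1_nonneg[where f=f and xs=xs, OF L min] meas1C[OF fm dfm] ly(2)]) simp
  also have "\<dots> \<le> ennreal (phi1 f L xs s st)"
    using ly(1) by (intro ennreal_leI) (simp add: mult.commute)
  finally show ?thesis unfolding eqf .
qed

lemma H2:
  fixes f :: "'a::euclidean_space \<Rightarrow> real"
  assumes cvx: "convex_on UNIV f" and der: "\<And>x. (f has_derivative (\<lambda>h. df x \<bullet> h)) (at x)"
    and L: "L > 0" and sm: "L_smooth L f df" and min: "\<And>x. f xs \<le> f x"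
    and mu: "\<mu> > 0" and sc: "strongly_convex \<mu> f df"
    and a: "a = sqrt (\<mu> / L)" and c: "c = 1 / sqrt (\<mu> * L)" and s: "0 \<le> s" "s \<le> t"
  shows "(\<integral>\<^sup>+e. (if t < s + e then ennreal (phi2 f \<mu> a xs t (Fl2 a s t st))
            else ennreal (phi2 f \<mu> a xs (s+e) (J2 df L c (s+e) (Fl2 a s (s+e) st)))) \<partial>Expo) \<le> ennreal (phi2 f \<mu> a xs s st)"
proof -
  have fm: "f \<in> borel_measurable borel" by (rule borel_measurable_continuous_onI[OF f_cont[OF der]])
  have dfm: "df \<in> borel_measurable borel" by (rule borel_measurable_continuous_onI[OF df_continuous[OF cvx der L sm]])
  note ly = lyap2[OF cvx der L sm mu sc a c s(2), of xs st]
  have eqf: "(\<lambda>e. if t < s + e then ennreal (phi2 f \<mu> a xs t (Fl2 a s t st))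
            else ennreal (phi2 f \<mu> a xs (s+e) (J2 df L c (s+e) (Fl2 a s (s+e) st))))
      = (\<lambda>e. if t - s < e then ennreal (phi2 f \<mu> a xs t (Fl2 a s t st))
            else ennreal (phi2 f \<mu> a xs (s+e) (J2 df L c (s+e) (Fl2 a s (s+e) st))))"
    by (rule ext) simp
  have "(\<integral>\<^sup>+e. (if t - s < e then ennreal (phi2 f \<mu> a xs t (Fl2 a s t st))
            else ennreal (phi2 f \<mu> a xs (s+e) (J2 df L c (s+e) (Fl2 a s (s+e) st)))) \<partial>Expo)
      = ennreal (phi2 f \<mu> a xs t (Fl2 a s t st) * exp (-(t-s))
      + integral {0..t-s} (\<lambda>e. exp (- e) * phi2 f \<mu> a xs (s+e) (J2 df L c (s+e) (Fl2 a s (s+e) st))))"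
    using s by (intro Expo_split[OF phi2_nonneg[where f=f and xs=xs, OF mu min] _ phi2_nonneg[where f=f and xs=xs, OF mu min] meas2C[OF fm dfm] ly(2)]) simp
  also have "\<dots> \<le> ennreal (phi2 f \<mu> a xs s st)"
    using ly(1) by (intro ennreal_leI) (simp add: mult.commute)
  finally show ?thesis unfolding eqf .
qed

theorem theorem3:
  fixes f :: "'a::euclidean_space \<Rightarrow> real" and df :: "'a \<Rightarrow> 'a"
    and L :: real and xs x0 z0 :: 'a
    and M :: "'w measure" and T :: "nat \<Rightarrow> 'w \<Rightarrow> real"
  assumes "prob_space M"
    and "poisson_jump_times M T"
    and "convex_on UNIV f"
    and "\<And>x. (f has_derivative (\<lambda>h. df x \<bullet> h)) (at x)"
    and "L > 0"
    and "L_smooth L f df"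
    and "\<And>x. f xs \<le> f x"
  shows
    "(\<forall>X Z. continuized_process M T (\<lambda>t. 2 / t) (\<lambda>t. 0) (\<lambda>t. 1 / L) (\<lambda>t. t / (2 * L))
                df x0 z0 X Z \<longrightarrow>
        (\<forall>t>0. (\<integral>\<^sup>+ w. ennreal (f (X w t) - f xs) \<partial>M)
                  \<le> ennreal (2 * L * (norm (z0 - xs))\<^sup>2 / t\<^sup>2))) \<and>
     (\<forall>\<mu>>0. strongly_convex \<mu> f df \<longrightarrow>
        (\<forall>X Z. continuized_process M T (\<lambda>t. sqrt (\<mu> / L)) (\<lambda>t. sqrt (\<mu> / L))
                  (\<lambda>t. 1 / L) (\<lambda>t. 1 / sqrt (\<mu> * L)) df x0 z0 X Z \<longrightarrow>
          (\<forall>t\<ge>0. (\<integral>\<^sup>+ w. ennreal (f (X w t) - f xs) \<partial>M)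
                  \<le> ennreal ((f x0 - f xs + \<mu> / 2 * (norm (z0 - xs))\<^sup>2) * exp (- sqrt (\<mu> / L) * t)))))"
proof -
  note P = assms(1) and PJ = assms(2) and cvx = assms(3) and der = assms(4) and L = assms(5)
    and sm = assms(6) and min = assms(7)
  have fm: "f \<in> borel_measurable borel" by (rule borel_measurable_continuous_onI[OF f_cont[OF der]])
  have dfm: "df \<in> borel_measurable borel" by (rule borel_measurable_continuous_onI[OF df_continuous[OF cvx der L sm]])
  show ?thesis
  proof (intro conjI allI impI)
    fix X Z and t :: real
    assume proc: "continuized_process M T (\<lambda>t. 2 / t) (\<lambda>t. 0) (\<lambda>t. 1 / L) (\<lambda>t. t / (2 * L)) df x0 z0 X Z"
      and t: "0 < t"
    have "(\<integral>\<^sup>+ w. ennreal (f (X w t) - f xs) \<partial>M) \<le> ennreal (1 / t\<^sup>2) * ennreal (phi1 f L xs 0 (x0, z0))"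
    proof (rule assemble[where st="\<lambda>w k. (X w (T k w), Z w (T k w))" and Y="\<lambda>w. (X w t, Z w t)"
          and Fl=Fl1 and J="J1 df L" and \<phi>="phi1 f L xs" and pinit="(x0, z0)", OF P PJ])
      show "0 \<le> t" using t by simp
      show "AE w in M. valid_jump_times (\<lambda>k. T k w) \<longrightarrow>
        ((\<forall>k. (X w (T (Suc k) w), Z w (T (Suc k) w)) = J1 df L (T (Suc k) w) (Fl1 (T k w) (T (Suc k) w) (X w (T k w), Z w (T k w)))) \<and>
         (\<forall>k. T k w \<le> t \<longrightarrow> t < T (Suc k) w \<longrightarrow> (X w t, Z w t) = Fl1 (T k w) t (X w (T k w), Z w (T k w))) \<and>
         (X w (T 0 w), Z w (T 0 w)) = (x0, z0) \<and>
         ennreal (f (X w t) - f xs) \<le> ennreal (1 / t\<^sup>2) * ennreal (phi1 f L xs t (X w t, Z w t)))"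
        using proc unfolding continuized_process_def
      proof eventually_elim
        case (elim w)
        show ?case
        proof
          assume v: "valid_jump_times (\<lambda>k. T k w)"
          with elim have pa: "continuized_path (\<lambda>t. 2 / t) (\<lambda>t. 0) (\<lambda>t. 1 / L) (\<lambda>t. t / (2 * L)) df x0 z0 (\<lambda>k. T k w) (X w) (Z w)"
            by blast
          have T0: "T 0 w = 0" using v by (simp add: valid_jump_times_def)
          have gb: "ennreal (f (X w t) - f xs) \<le> ennreal (1 / t\<^sup>2) * ennreal (phi1 f L xs t (X w t, Z w t))"
          proof -
            have "f (X w t) - f xs \<le> (1 / t\<^sup>2) * phi1 f L xs t (X w t, Z w t)"
              using t L by (simp add: phi1_def field_simps)
            then show ?thesis
              by (subst ennreal_mult[symmetric]) (auto intro!: ennreal_leI phi1_nonneg[where f=f and xs=xs, OF L min])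
          qed
          show "(\<forall>k. (X w (T (Suc k) w), Z w (T (Suc k) w)) = J1 df L (T (Suc k) w) (Fl1 (T k w) (T (Suc k) w) (X w (T k w), Z w (T k w)))) \<and>
             (\<forall>k. T k w \<le> t \<longrightarrow> t < T (Suc k) w \<longrightarrow> (X w t, Z w t) = Fl1 (T k w) t (X w (T k w), Z w (T k w))) \<and>
             (X w (T 0 w), Z w (T 0 w)) = (x0, z0) \<and>
             ennreal (f (X w t) - f xs) \<le> ennreal (1 / t\<^sup>2) * ennreal (phi1 f L xs t (X w t, Z w t))"
            using path1_step[OF v pa] path1_flow[OF v pa _ _ t] path1_init[OF v pa] gb T0 by auto
        qed
      qed
      show "(\<lambda>p. phi1 f L xs t (Fl1 (fst p) t (snd p))) \<in> borel_measurable (borel \<Otimes>\<^sub>M borel)"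
        by (rule meas1A[OF fm dfm])
      show "(\<lambda>q. (fst (fst q) + snd q, J1 df L (fst (fst q) + snd q) (Fl1 (fst (fst q)) (fst (fst q) + snd q) (snd (fst q)))))
          \<in> measurable ((borel \<Otimes>\<^sub>M borel) \<Otimes>\<^sub>M borel) (borel \<Otimes>\<^sub>M borel)"
        by (rule meas1B[OF fm dfm])
      show "\<And>u st. 0 \<le> phi1 f L xs u st" by (rule phi1_nonneg[where f=f and xs=xs, OF L min])
      show "\<And>s st. 0 \<le> s \<Longrightarrow> s \<le> t \<Longrightarrow> (\<integral>\<^sup>+e. (if t < s + e then ennreal (phi1 f L xs t (Fl1 s t st))
            else ennreal (phi1 f L xs (s+e) (J1 df L (s+e) (Fl1 s (s+e) st)))) \<partial>Expo) \<le> ennreal (phi1 f L xs s st)"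
        by (rule H1[OF cvx der L sm min])
    qed
    also have "ennreal (1 / t\<^sup>2) * ennreal (phi1 f L xs 0 (x0, z0)) = ennreal (2 * L * (norm (z0 - xs))\<^sup>2 / t\<^sup>2)"
      using L by (simp add: phi1_def ennreal_mult[symmetric])
    finally show "(\<integral>\<^sup>+ w. ennreal (f (X w t) - f xs) \<partial>M) \<le> ennreal (2 * L * (norm (z0 - xs))\<^sup>2 / t\<^sup>2)" .
  next
    fix \<mu> :: real and X Z and t :: real
    assume mu: "\<mu> > 0" and sc: "strongly_convex \<mu> f df"
      and proc: "continuized_process M T (\<lambda>t. sqrt (\<mu> / L)) (\<lambda>t. sqrt (\<mu> / L))
                  (\<lambda>t. 1 / L) (\<lambda>t. 1 / sqrt (\<mu> * L)) df x0 z0 X Z"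
      and t: "0 \<le> t"
    define a where "a = sqrt (\<mu> / L)"
    define c where "c = 1 / sqrt (\<mu> * L)"
    have "(\<integral>\<^sup>+ w. ennreal (f (X w t) - f xs) \<partial>M) \<le> ennreal (exp (- a * t)) * ennreal (phi2 f \<mu> a xs 0 (x0, z0))"
    proof (rule assemble[where st="\<lambda>w k. (X w (T k w), Z w (T k w))" and Y="\<lambda>w. (X w t, Z w t)"
          and Fl="Fl2 a" and J="J2 df L c" and \<phi>="phi2 f \<mu> a xs" and pinit="(x0, z0)", OF P PJ t])
      show "AE w in M. valid_jump_times (\<lambda>k. T k w) \<longrightarrow>
        ((\<forall>k. (X w (T (Suc k) w), Z w (T (Suc k) w)) = J2 df L c (T (Suc k) w) (Fl2 a (T k w) (T (Suc k) w) (X w (T k w), Z w (T k w)))) \<and>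
         (\<forall>k. T k w \<le> t \<longrightarrow> t < T (Suc k) w \<longrightarrow> (X w t, Z w t) = Fl2 a (T k w) t (X w (T k w), Z w (T k w))) \<and>
         (X w (T 0 w), Z w (T 0 w)) = (x0, z0) \<and>
         ennreal (f (X w t) - f xs) \<le> ennreal (exp (- a * t)) * ennreal (phi2 f \<mu> a xs t (X w t, Z w t)))"
        using proc unfolding continuized_process_def a_def[symmetric] c_def[symmetric]
      proof eventually_elim
        case (elim w)
        show ?case
        proof
          assume v: "valid_jump_times (\<lambda>k. T k w)"
          with elim have pa: "continuized_path (\<lambda>t. a) (\<lambda>t. a) (\<lambda>t. 1 / L) (\<lambda>t. c) df x0 z0 (\<lambda>k. T k w) (X w) (Z w)"
            by blast
          have T0: "T 0 w = 0" using v by (simp add: valid_jump_times_def)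
          have gb: "ennreal (f (X w t) - f xs) \<le> ennreal (exp (- a * t)) * ennreal (phi2 f \<mu> a xs t (X w t, Z w t))"
          proof -
            have "exp (- a * t) * phi2 f \<mu> a xs t (X w t, Z w t) = f (X w t) - f xs + \<mu> / 2 * (norm (Z w t - xs))\<^sup>2"
              by (simp add: phi2_def exp_minus field_simps)
            then have "f (X w t) - f xs \<le> exp (- a * t) * phi2 f \<mu> a xs t (X w t, Z w t)"
              using mu by simp
            then show ?thesis
              by (subst ennreal_mult[symmetric]) (auto intro!: ennreal_leI phi2_nonneg[where f=f and xs=xs, OF mu min])
          qed
          show "(\<forall>k. (X w (T (Suc k) w), Z w (T (Suc k) w)) = J2 df L c (T (Suc k) w) (Fl2 a (T k w) (T (Suc k) w) (X w (T k w), Z w (T k w)))) \<and>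
             (\<forall>k. T k w \<le> t \<longrightarrow> t < T (Suc k) w \<longrightarrow> (X w t, Z w t) = Fl2 a (T k w) t (X w (T k w), Z w (T k w))) \<and>
             (X w (T 0 w), Z w (T 0 w)) = (x0, z0) \<and>
             ennreal (f (X w t) - f xs) \<le> ennreal (exp (- a * t)) * ennreal (phi2 f \<mu> a xs t (X w t, Z w t))"
            using path2_step[OF v pa] path2_flow[OF v pa] path2_init[OF v pa] gb T0 by auto
        qed
      qed
      show "(\<lambda>p. phi2 f \<mu> a xs t (Fl2 a (fst p) t (snd p))) \<in> borel_measurable (borel \<Otimes>\<^sub>M borel)"
        by (rule meas2A[OF fm dfm])
      show "(\<lambda>q. (fst (fst q) + snd q, J2 df L c (fst (fst q) + snd q) (Fl2 a (fst (fst q)) (fst (fst q) + snd q) (snd (fst q)))))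
          \<in> measurable ((borel \<Otimes>\<^sub>M borel) \<Otimes>\<^sub>M borel) (borel \<Otimes>\<^sub>M borel)"
        by (rule meas2B[OF fm dfm])
      show "\<And>u st. 0 \<le> phi2 f \<mu> a xs u st" by (rule phi2_nonneg[where f=f and xs=xs, OF mu min])
      show "\<And>s st. 0 \<le> s \<Longrightarrow> s \<le> t \<Longrightarrow> (\<integral>\<^sup>+e. (if t < s + e then ennreal (phi2 f \<mu> a xs t (Fl2 a s t st))
            else ennreal (phi2 f \<mu> a xs (s+e) (J2 df L c (s+e) (Fl2 a s (s+e) st)))) \<partial>Expo) \<le> ennreal (phi2 f \<mu> a xs s st)"
        by (rule H2[OF cvx der L sm min mu sc a_def c_def])
    qed
    also have "ennreal (exp (- a * t)) * ennreal (phi2 f \<mu> a xs 0 (x0, z0))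
        = ennreal ((f x0 - f xs + \<mu> / 2 * (norm (z0 - xs))\<^sup>2) * exp (- sqrt (\<mu> / L) * t))"
      using phi2_nonneg[where f=f and xs=xs and a=a and u=0 and p="(x0, z0)", OF mu min]
      by (simp add: phi2_def ennreal_mult[symmetric] a_def mult.commute)
    finally show "(\<integral>\<^sup>+ w. ennreal (f (X w t) - f xs) \<partial>M)
        \<le> ennreal ((f x0 - f xs + \<mu> / 2 * (norm (z0 - xs))\<^sup>2) * exp (- sqrt (\<mu> / L) * t))" .
  qed
qed


end
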